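(* Let $\Lambda$ be a ring, let $\operatorname{mod}\Lambda$ be the category of finite length right $\Lambda$-modules, and let $T,M\in\operatorname{mod}\Lambda$. If $\varepsilon\colon 0\to T'\to E\to M\to0$ and $\eta\colon 0\to T''\to F\to M\to0$ are universal $\operatorname{add}(T)$-extensions of $M$, then $E\cong F$ modulo $\operatorname{add}(T)$, i.e. $E$ and $F$ are isomorphic as objects of the quotient category $\operatorname{mod}\Lambda/\operatorname{add}(T)$.
   Context: $\operatorname{add}(T)$ is the full subcategory of direct sums of direct summands of $T$. An element $\varepsilon\in\operatorname{Ext}^1(M,T')$ with $T'\in\operatorname{add}(T)$ is a universal $\operatorname{add}(T)$-extension of $M$ if the map $\operatorname{Hom}(T',T)\to\operatorname{Ext}^1(M,T)$, $\phi\mapsto\phi\varepsilon$ (push-out along $\phi$), is surjective. The quotient category $\operatorname{mod}\Lambda/\operatorname{add}(T)$ has the same objects as $\operatorname{mod}\Lambda$ and morphisms modulo those factoring through an object of $\operatorname{add}(T)$. *)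

theory Defs
  imports "HOL-Algebra.Ring"
begin

record ('a, 'r) rmod =
  mcar  :: "'a set"
  madd  :: "'a \<Rightarrow> 'a \<Rightarrow> 'a"
  mzero :: 'a
  mneg  :: "'a \<Rightarrow> 'a"
  mact  :: "'a \<Rightarrow> 'r \<Rightarrow> 'a"

definition rmodule :: "'r ring \<Rightarrow> ('a, 'r) rmod \<Rightarrow> bool" where
  "rmodule R M \<longleftrightarrow> ring R \<and>
     mzero M \<in> mcar M \<and>
     (\<forall>x\<in>mcar M. \<forall>y\<in>mcar M. madd M x y \<in> mcar M) \<and>
     (\<forall>x\<in>mcar M. mneg M x \<in> mcar M) \<and>
     (\<forall>x\<in>mcar M. \<forall>y\<in>mcar M. \<forall>z\<in>mcar M. madd M (madd M x y) z = madd M x (madd M y z)) \<and>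
     (\<forall>x\<in>mcar M. \<forall>y\<in>mcar M. madd M x y = madd M y x) \<and>
     (\<forall>x\<in>mcar M. madd M x (mzero M) = x) \<and>
     (\<forall>x\<in>mcar M. madd M x (mneg M x) = mzero M) \<and>
     (\<forall>x\<in>mcar M. \<forall>r\<in>carrier R. mact M x r \<in> mcar M) \<and>
     (\<forall>x\<in>mcar M. \<forall>y\<in>mcar M. \<forall>r\<in>carrier R.
        mact M (madd M x y) r = madd M (mact M x r) (mact M y r)) \<and>
     (\<forall>x\<in>mcar M. \<forall>r\<in>carrier R. \<forall>s\<in>carrier R.
        mact M x (r \<oplus>\<^bsub>R\<^esub> s) = madd M (mact M x r) (mact M x s)) \<and>
     (\<forall>x\<in>mcar M. \<forall>r\<in>carrier R. \<forall>s\<in>carrier R.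
        mact M x (r \<otimes>\<^bsub>R\<^esub> s) = mact M (mact M x r) s) \<and>
     (\<forall>x\<in>mcar M. mact M x \<one>\<^bsub>R\<^esub> = x)"

definition rhom :: "'r ring \<Rightarrow> ('a, 'r) rmod \<Rightarrow> ('b, 'r) rmod \<Rightarrow> ('a \<Rightarrow> 'b) \<Rightarrow> bool" where
  "rhom R M N f \<longleftrightarrow>
     (\<forall>x\<in>mcar M. f x \<in> mcar N) \<and>
     (\<forall>x\<in>mcar M. \<forall>y\<in>mcar M. f (madd M x y) = madd N (f x) (f y)) \<and>
     (\<forall>x\<in>mcar M. \<forall>r\<in>carrier R. f (mact M x r) = mact N (f x) r)"

definition riso :: "'r ring \<Rightarrow> ('a, 'r) rmod \<Rightarrow> ('b, 'r) rmod \<Rightarrow> bool" where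
  "riso R M N \<longleftrightarrow> (\<exists>f g. rhom R M N f \<and> rhom R N M g \<and>
      (\<forall>x\<in>mcar M. g (f x) = x) \<and> (\<forall>y\<in>mcar N. f (g y) = y))"

definition submod :: "'r ring \<Rightarrow> ('a, 'r) rmod \<Rightarrow> 'a set \<Rightarrow> bool" where
  "submod R M S \<longleftrightarrow> S \<subseteq> mcar M \<and> mzero M \<in> S \<and>
     (\<forall>x\<in>S. \<forall>y\<in>S. madd M x y \<in> S) \<and> (\<forall>x\<in>S. mneg M x \<in> S) \<and>
     (\<forall>x\<in>S. \<forall>r\<in>carrier R. mact M x r \<in> S)"

definition finite_length :: "'r ring \<Rightarrow> ('a, 'r) rmod \<Rightarrow> bool" where
  "finite_length R M \<longleftrightarrow> rmodule R M \<and>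
     (\<exists>n C. C 0 = {mzero M} \<and> C n = mcar M \<and> (\<forall>i\<le>n. submod R M (C i)) \<and>
        (\<forall>i<n. C i \<subset> C (Suc i) \<and>
           \<not> (\<exists>S. submod R M S \<and> C i \<subset> S \<and> S \<subset> C (Suc i))))"

definition summand :: "'r ring \<Rightarrow> ('a, 'r) rmod \<Rightarrow> 'a set \<Rightarrow> bool" where
  "summand R M S \<longleftrightarrow> submod R M S \<and>
     (\<exists>C. submod R M C \<and> S \<inter> C = {mzero M} \<and>
        (\<forall>x\<in>mcar M. \<exists>s\<in>S. \<exists>c\<in>C. x = madd M s c))"

text \<open>The external direct sum S_0 \<oplus> ... \<oplus> S_(k-1) of submodules S_i of T,
  realised on functions nat \<Rightarrow> 't (components \<ge> k are zero).\<close>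
definition dsum :: "('t, 'r) rmod \<Rightarrow> nat \<Rightarrow> (nat \<Rightarrow> 't set) \<Rightarrow> (nat \<Rightarrow> 't, 'r) rmod" where
  "dsum T k S = \<lparr> mcar = {x. (\<forall>i<k. x i \<in> S i) \<and> (\<forall>i\<ge>k. x i = mzero T)},
     madd = (\<lambda>x y i. if i < k then madd T (x i) (y i) else mzero T),
     mzero = (\<lambda>i. mzero T),
     mneg = (\<lambda>x i. if i < k then mneg T (x i) else mzero T),
     mact = (\<lambda>x r i. if i < k then mact T (x i) r else mzero T) \<rparr>"

definition is_add_model :: "'r ring \<Rightarrow> ('t, 'r) rmod \<Rightarrow> (nat \<Rightarrow> 't, 'r) rmod \<Rightarrow> bool" where
  "is_add_model R T X \<longleftrightarrow> (\<exists>k S. (\<forall>i<k. summand R T (S i)) \<and> X = dsum T k S)"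

text \<open>X \<in> add(T): X is isomorphic to a direct sum of direct summands of T.\<close>
definition in_add :: "'r ring \<Rightarrow> ('t, 'r) rmod \<Rightarrow> ('a, 'r) rmod \<Rightarrow> bool" where
  "in_add R T X \<longleftrightarrow> (\<exists>Y. is_add_model R T Y \<and> riso R X Y)"

definition factors_add :: "'r ring \<Rightarrow> ('t, 'r) rmod \<Rightarrow> ('a, 'r) rmod \<Rightarrow> ('b, 'r) rmod
    \<Rightarrow> ('a \<Rightarrow> 'b) \<Rightarrow> bool" where
  "factors_add R T M N f \<longleftrightarrow> (\<exists>Y h g. is_add_model R T Y \<and> rhom R M Y h \<and> rhom R Y N g \<and>
      (\<forall>x\<in>mcar M. f x = g (h x)))"

text \<open>Isomorphism in the quotient category mod R / add(T).\<close>
definition iso_mod_add :: "'r ring \<Rightarrow> ('t, 'r) rmod \<Rightarrow> ('a, 'r) rmod \<Rightarrow> ('b, 'r) rmod \<Rightarrow> bool" where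
  "iso_mod_add R T E F \<longleftrightarrow> (\<exists>f g. rhom R E F f \<and> rhom R F E g \<and>
      factors_add R T E E (\<lambda>x. madd E (g (f x)) (mneg E x)) \<and>
      factors_add R T F F (\<lambda>y. madd F (f (g y)) (mneg F y)))"

definition ses :: "'r ring \<Rightarrow> ('a, 'r) rmod \<Rightarrow> ('x, 'r) rmod \<Rightarrow> ('b, 'r) rmod
    \<Rightarrow> ('a \<Rightarrow> 'x) \<Rightarrow> ('x \<Rightarrow> 'b) \<Rightarrow> bool" where
  "ses R A X B i p \<longleftrightarrow> rhom R A X i \<and> rhom R X B p \<and> inj_on i (mcar A) \<and>
     p ` mcar X = mcar B \<and> {x \<in> mcar X. p x = mzero B} = i ` mcar A"

text \<open>Universal add(T)-extension of M: a short exact sequence eps = (0 \<rightarrow> T' \<rightarrow> E \<rightarrow> M \<rightarrow> 0)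
  in mod R with T' \<in> add(T) such that every class xi \<in> Ext^1(M,T) is a push-out phi eps
  with phi : T' \<rightarrow> T. Elements of Ext^1(M,T) are represented by extensions
  0 \<rightarrow> T \<rightarrow> X \<rightarrow> M \<rightarrow> 0 whose middle term lives on the type 't \<times> 'm (every extension
  is equivalent to such one), and xi = phi eps holds iff there is a morphism of
  extensions (phi, g, id_M) from eps to xi.\<close>
definition universal_add_ext :: "'r ring \<Rightarrow> ('t, 'r) rmod \<Rightarrow> ('m, 'r) rmod \<Rightarrow> ('a, 'r) rmod
    \<Rightarrow> ('e, 'r) rmod \<Rightarrow> ('a \<Rightarrow> 'e) \<Rightarrow> ('e \<Rightarrow> 'm) \<Rightarrow> bool" where
  "universal_add_ext R T M T' E i p \<longleftrightarrow>
     in_add R T T' \<and> ses R T' E M i p \<and>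
     (\<forall>(X :: ('t \<times> 'm, 'r) rmod) j q. finite_length R X \<and> ses R T X M j q \<longrightarrow>
        (\<exists>\<phi> g. rhom R T' T \<phi> \<and> rhom R E X g \<and>
           (\<forall>t\<in>mcar T'. g (i t) = j (\<phi> t)) \<and> (\<forall>e\<in>mcar E. q (g e) = p e)))"

end

theory Submission
  imports Defs
begin
lemma fl_rmod: "finite_length R M \<Longrightarrow> rmodule R M" unfolding finite_length_def by (rule conjunct1)


locale rm = fixes R :: "'r ring" and M :: "('a,'r) rmod"
  assumes rmod: "rmodule R M"
begin
lemma ring: "ring R" using rmod unfolding rmodule_def by auto
lemma zero_closed[simp]: "mzero M \<in> mcar M" using rmod unfolding rmodule_def by auto
lemma add_closed[simp]: "x \<in> mcar M \<Longrightarrow> y \<in> mcar M \<Longrightarrow> madd M x y \<in> mcar M"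
  using rmod unfolding rmodule_def by auto
lemma neg_closed[simp]: "x \<in> mcar M \<Longrightarrow> mneg M x \<in> mcar M"
  using rmod unfolding rmodule_def by auto
lemma act_closed[simp]: "x \<in> mcar M \<Longrightarrow> r \<in> carrier R \<Longrightarrow> mact M x r \<in> mcar M"
  using rmod unfolding rmodule_def by auto
lemma assoc: "x \<in> mcar M \<Longrightarrow> y \<in> mcar M \<Longrightarrow> z \<in> mcar M \<Longrightarrow> madd M (madd M x y) z = madd M x (madd M y z)"
  using rmod unfolding rmodule_def by auto
lemma comm: "x \<in> mcar M \<Longrightarrow> y \<in> mcar M \<Longrightarrow> madd M x y = madd M y x"
  using rmod unfolding rmodule_def by auto
lemma lcomm: "x \<in> mcar M \<Longrightarrow> y \<in> mcar M \<Longrightarrow> z \<in> mcar M \<Longrightarrow> madd M x (madd M y z) = madd M y (madd M x z)"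
  by (metis assoc comm)
lemmas ac = assoc comm lcomm
lemma add_zero[simp]: "x \<in> mcar M \<Longrightarrow> madd M x (mzero M) = x"
  using rmod unfolding rmodule_def by auto
lemma zero_add[simp]: "x \<in> mcar M \<Longrightarrow> madd M (mzero M) x = x"
  using add_zero comm by simp
lemma add_neg[simp]: "x \<in> mcar M \<Longrightarrow> madd M x (mneg M x) = mzero M"
  using rmod unfolding rmodule_def by auto
lemma neg_add[simp]: "x \<in> mcar M \<Longrightarrow> madd M (mneg M x) x = mzero M"
  using add_neg comm by simp
lemma add_neg_cancel[simp]: "x \<in> mcar M \<Longrightarrow> y \<in> mcar M \<Longrightarrow> madd M x (madd M (mneg M x) y) = y"
  by (metis assoc add_neg neg_closed zero_add)
lemma neg_add_cancel[simp]: "x \<in> mcar M \<Longrightarrow> y \<in> mcar M \<Longrightarrow> madd M (mneg M x) (madd M x y) = y"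
  by (metis assoc neg_add neg_closed zero_add)
lemma cancel: "x \<in> mcar M \<Longrightarrow> y \<in> mcar M \<Longrightarrow> z \<in> mcar M \<Longrightarrow> madd M x y = madd M x z \<Longrightarrow> y = z"
  by (metis neg_add_cancel)
lemma cancel_iff[simp]: "x \<in> mcar M \<Longrightarrow> y \<in> mcar M \<Longrightarrow> z \<in> mcar M \<Longrightarrow> (madd M x y = madd M x z) = (y = z)"
  using cancel by blast
lemma neg_unique: "x \<in> mcar M \<Longrightarrow> y \<in> mcar M \<Longrightarrow> madd M x y = mzero M \<Longrightarrow> y = mneg M x"
  by (metis add_neg cancel neg_closed)
lemma neg_neg[simp]: "x \<in> mcar M \<Longrightarrow> mneg M (mneg M x) = x"
  by (metis neg_add neg_closed neg_unique)
lemma neg_zero[simp]: "mneg M (mzero M) = mzero M"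
  by (metis add_zero neg_unique zero_closed)
lemma neg_distrib: "x \<in> mcar M \<Longrightarrow> y \<in> mcar M \<Longrightarrow> mneg M (madd M x y) = madd M (mneg M x) (mneg M y)"
proof -
  assume a: "x \<in> mcar M" "y \<in> mcar M"
  have "madd M (madd M x y) (madd M (mneg M x) (mneg M y)) = mzero M"
    using a by (simp add: ac)
  thus ?thesis using a by (metis add_closed neg_closed neg_unique)
qed
lemma eq_iff_diff: "x \<in> mcar M \<Longrightarrow> y \<in> mcar M \<Longrightarrow> (madd M x (mneg M y) = mzero M) = (x = y)"
  by (metis add_neg comm neg_closed neg_neg neg_unique)
lemma act_add: "x \<in> mcar M \<Longrightarrow> y \<in> mcar M \<Longrightarrow> r \<in> carrier R \<Longrightarrow>
        mact M (madd M x y) r = madd M (mact M x r) (mact M y r)"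
  using rmod unfolding rmodule_def by auto
lemma act_radd: "x \<in> mcar M \<Longrightarrow> r \<in> carrier R \<Longrightarrow> s \<in> carrier R \<Longrightarrow>
        mact M x (r \<oplus>\<^bsub>R\<^esub> s) = madd M (mact M x r) (mact M x s)"
  using rmod unfolding rmodule_def by auto
lemma act_mult: "x \<in> mcar M \<Longrightarrow> r \<in> carrier R \<Longrightarrow> s \<in> carrier R \<Longrightarrow>
        mact M x (r \<otimes>\<^bsub>R\<^esub> s) = mact M (mact M x r) s"
  using rmod unfolding rmodule_def by auto
lemma act_one: "x \<in> mcar M \<Longrightarrow> mact M x \<one>\<^bsub>R\<^esub> = x"
  using rmod unfolding rmodule_def by auto
lemma act_zero[simp]: "r \<in> carrier R \<Longrightarrow> mact M (mzero M) r = mzero M"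
proof -
  assume r: "r \<in> carrier R"
  have "madd M (mact M (mzero M) r) (mact M (mzero M) r) = madd M (mact M (mzero M) r) (mzero M)"
    using r act_add[of "mzero M" "mzero M" r] by simp
  thus ?thesis using r cancel by (metis act_closed zero_closed)
qed
lemma act_neg: "x \<in> mcar M \<Longrightarrow> r \<in> carrier R \<Longrightarrow> mact M (mneg M x) r = mneg M (mact M x r)"
  by (metis act_add act_closed act_zero add_neg neg_closed neg_unique)
end

lemma rhom_closed: "rhom R A B f \<Longrightarrow> x \<in> mcar A \<Longrightarrow> f x \<in> mcar B"
  unfolding rhom_def by blast
lemma rhom_add: "rhom R A B f \<Longrightarrow> x \<in> mcar A \<Longrightarrow> y \<in> mcar A \<Longrightarrow> f (madd A x y) = madd B (f x) (f y)"
  unfolding rhom_def by blast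
lemma rhom_act: "rhom R A B f \<Longrightarrow> x \<in> mcar A \<Longrightarrow> r \<in> carrier R \<Longrightarrow> f (mact A x r) = mact B (f x) r"
  unfolding rhom_def by blast
lemma rhom_zero: "rmodule R A \<Longrightarrow> rmodule R B \<Longrightarrow> rhom R A B f \<Longrightarrow> f (mzero A) = mzero B"
proof -
  assume a: "rmodule R A" "rmodule R B" "rhom R A B f"
  interpret A: rm R A by (rule rm.intro) fact
  interpret B: rm R B by (rule rm.intro) fact
  have "madd B (f (mzero A)) (f (mzero A)) = madd B (f (mzero A)) (mzero B)"
    using rhom_add[OF a(3), of "mzero A" "mzero A"] rhom_closed[OF a(3)] by simp
  thus ?thesis using B.cancel rhom_closed[OF a(3)] by (metis A.zero_closed B.zero_closed)
qed
lemma rhom_neg: "rmodule R A \<Longrightarrow> rmodule R B \<Longrightarrow> rhom R A B f \<Longrightarrow> x \<in> mcar A \<Longrightarrow> f (mneg A x) = mneg B (f x)"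
proof -
  assume a: "rmodule R A" "rmodule R B" "rhom R A B f" "x \<in> mcar A"
  interpret A: rm R A by (rule rm.intro) fact
  interpret B: rm R B by (rule rm.intro) fact
  have "madd B (f x) (f (mneg A x)) = mzero B"
    using rhom_add[OF a(3), of x "mneg A x"] a rhom_zero[OF a(1-3)] by simp
  thus ?thesis using B.neg_unique a rhom_closed by (metis A.neg_closed)
qed
lemma rhom_comp: "rhom R A B f \<Longrightarrow> rhom R B C g \<Longrightarrow> rhom R A C (\<lambda>x. g (f x))"
  unfolding rhom_def by simp
lemma rhom_id: "rhom R A A (\<lambda>x. x)" unfolding rhom_def by simp
lemma rhom_cong: "rmodule R A \<Longrightarrow> rhom R A B f \<Longrightarrow> (\<And>x. x \<in> mcar A \<Longrightarrow> g x = f x) \<Longrightarrow> rhom R A B g"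
proof -
  assume a: "rmodule R A" "rhom R A B f" "\<And>x. x \<in> mcar A \<Longrightarrow> g x = f x"
  interpret A: rm R A by (rule rm.intro) fact
  show ?thesis using a(2) unfolding rhom_def by (simp add: a(3))
qed


definition prod_mod :: "('a,'r) rmod \<Rightarrow> ('b,'r) rmod \<Rightarrow> ('a \<times> 'b, 'r) rmod" where
  "prod_mod A B = \<lparr> mcar = mcar A \<times> mcar B,
     madd = (\<lambda>x y. (madd A (fst x) (fst y), madd B (snd x) (snd y))),
     mzero = (mzero A, mzero B),
     mneg = (\<lambda>x. (mneg A (fst x), mneg B (snd x))),
     mact = (\<lambda>x r. (mact A (fst x) r, mact B (snd x) r)) \<rparr>"

lemma prod_mod_rmodule:
  assumes "rmodule R A" "rmodule R B" shows "rmodule R (prod_mod A B)"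
proof -
  interpret A: rm R A by (rule rm.intro) fact
  interpret B: rm R B by (rule rm.intro) fact
  show ?thesis unfolding rmodule_def prod_mod_def
    apply (simp add: A.ring)
    apply (intro conjI ballI)
    apply (auto simp: A.assoc B.assoc A.act_add B.act_add A.act_radd B.act_radd A.act_mult B.act_mult
         A.act_one B.act_one)
    apply (simp_all add: A.comm B.comm)
    done
qed

definition qmod :: "('u,'r) rmod \<Rightarrow> ('u \<Rightarrow> 'v) \<Rightarrow> 'v set \<Rightarrow> ('v,'r) rmod" where
  "qmod A \<Phi> B = \<lparr> mcar = B,
     madd = (\<lambda>x y. \<Phi> (madd A (SOME u. u \<in> mcar A \<and> \<Phi> u = x) (SOME u. u \<in> mcar A \<and> \<Phi> u = y))),
     mzero = \<Phi> (mzero A),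
     mneg = (\<lambda>x. \<Phi> (mneg A (SOME u. u \<in> mcar A \<and> \<Phi> u = x))),
     mact = (\<lambda>x r. \<Phi> (mact A (SOME u. u \<in> mcar A \<and> \<Phi> u = x) r)) \<rparr>"

locale qm = rm R A for R :: "'r ring" and A :: "('u,'r) rmod" +
  fixes \<Phi> :: "'u \<Rightarrow> 'v" and B :: "'v set"
  assumes into: "\<And>u. u \<in> mcar A \<Longrightarrow> \<Phi> u \<in> B"
    and onto: "\<And>x. x \<in> B \<Longrightarrow> \<exists>u\<in>mcar A. \<Phi> u = x"
    and c_add: "\<And>u v u' v'. u \<in> mcar A \<Longrightarrow> v \<in> mcar A \<Longrightarrow> u' \<in> mcar A \<Longrightarrow> v' \<in> mcar A \<Longrightarrow>
        \<Phi> u = \<Phi> u' \<Longrightarrow> \<Phi> v = \<Phi> v' \<Longrightarrow> \<Phi> (madd A u v) = \<Phi> (madd A u' v')"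
    and c_neg: "\<And>u u'. u \<in> mcar A \<Longrightarrow> u' \<in> mcar A \<Longrightarrow> \<Phi> u = \<Phi> u' \<Longrightarrow> \<Phi> (mneg A u) = \<Phi> (mneg A u')"
    and c_act: "\<And>u u' r. u \<in> mcar A \<Longrightarrow> u' \<in> mcar A \<Longrightarrow> r \<in> carrier R \<Longrightarrow> \<Phi> u = \<Phi> u' \<Longrightarrow>
        \<Phi> (mact A u r) = \<Phi> (mact A u' r)"
begin
definition "L x = (SOME u. u \<in> mcar A \<and> \<Phi> u = x)"
lemma L: "x \<in> B \<Longrightarrow> L x \<in> mcar A \<and> \<Phi> (L x) = x"
  unfolding L_def by (rule someI_ex) (use onto in blast)
lemma LPhi: "u \<in> mcar A \<Longrightarrow> \<Phi> (L (\<Phi> u)) = \<Phi> u" using L into by blast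
lemma LA: "u \<in> mcar A \<Longrightarrow> L (\<Phi> u) \<in> mcar A" using L into by blast
lemma q_car[simp]: "mcar (qmod A \<Phi> B) = B" by (simp add: qmod_def)
lemma h_add: "u \<in> mcar A \<Longrightarrow> v \<in> mcar A \<Longrightarrow> madd (qmod A \<Phi> B) (\<Phi> u) (\<Phi> v) = \<Phi> (madd A u v)"
  unfolding qmod_def L_def[symmetric] by (simp, rule c_add) (simp_all add: LPhi LA)
lemma h_neg: "u \<in> mcar A \<Longrightarrow> mneg (qmod A \<Phi> B) (\<Phi> u) = \<Phi> (mneg A u)"
  unfolding qmod_def L_def[symmetric] by (simp, rule c_neg) (simp_all add: LPhi LA)
lemma h_act: "u \<in> mcar A \<Longrightarrow> r \<in> carrier R \<Longrightarrow> mact (qmod A \<Phi> B) (\<Phi> u) r = \<Phi> (mact A u r)"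
  unfolding qmod_def L_def[symmetric] by (simp, rule c_act) (simp_all add: LPhi LA)
lemma h_zero: "mzero (qmod A \<Phi> B) = \<Phi> (mzero A)" by (simp add: qmod_def)
lemma q_hom: "rhom R A (qmod A \<Phi> B) \<Phi>"
  unfolding rhom_def by (simp add: into h_add h_act)
lemma q_rmodule: "rmodule R (qmod A \<Phi> B)"
proof -
  have ex: "\<And>x. x \<in> B \<Longrightarrow> \<exists>u\<in>mcar A. x = \<Phi> u" using onto by (metis (full_types))
  show ?thesis unfolding rmodule_def q_car
  proof (intro conjI ballI)
    show "ring R" by (rule ring)
    show "mzero (qmod A \<Phi> B) \<in> B" by (simp add: h_zero into)
  next
    fix x y assume "x \<in> B" "y \<in> B"
    then show "madd (qmod A \<Phi> B) x y \<in> B" using ex[of x] ex[of y] by (auto simp: h_add into)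
  next
    fix x assume "x \<in> B"
    then show "mneg (qmod A \<Phi> B) x \<in> B" using ex[of x] by (auto simp: h_neg into)
  next
    fix x y z assume "x \<in> B" "y \<in> B" "z \<in> B"
    then obtain a b c where "a \<in> mcar A" "b \<in> mcar A" "c \<in> mcar A" "x = \<Phi> a" "y = \<Phi> b" "z = \<Phi> c"
      using ex[of x] ex[of y] ex[of z] by blast
    then show "madd (qmod A \<Phi> B) (madd (qmod A \<Phi> B) x y) z = madd (qmod A \<Phi> B) x (madd (qmod A \<Phi> B) y z)"
      by (simp add: h_add assoc)
  next
    fix x y assume "x \<in> B" "y \<in> B"
    then obtain a b where "a \<in> mcar A" "b \<in> mcar A" "x = \<Phi> a" "y = \<Phi> b"
      using ex[of x] ex[of y] by blast
    then show "madd (qmod A \<Phi> B) x y = madd (qmod A \<Phi> B) y x"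
      by (simp add: h_add comm)
  next
    fix x assume "x \<in> B"
    then obtain a where "a \<in> mcar A" "x = \<Phi> a" using ex[of x] by blast
    then show "madd (qmod A \<Phi> B) x (mzero (qmod A \<Phi> B)) = x"
      by (simp add: h_add h_zero)
  next
    fix x assume "x \<in> B"
    then obtain a where "a \<in> mcar A" "x = \<Phi> a" using ex[of x] by blast
    then show "madd (qmod A \<Phi> B) x (mneg (qmod A \<Phi> B) x) = mzero (qmod A \<Phi> B)"
      by (simp add: h_add h_zero h_neg)
  next
    fix x r assume "x \<in> B" "r \<in> carrier R"
    then show "mact (qmod A \<Phi> B) x r \<in> B" using ex[of x] by (auto simp: h_act into)
  next
    fix x y r assume "x \<in> B" "y \<in> B" "r \<in> carrier R"
    then obtain a b where "a \<in> mcar A" "b \<in> mcar A" "x = \<Phi> a" "y = \<Phi> b"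
      using ex[of x] ex[of y] by blast
    then show "mact (qmod A \<Phi> B) (madd (qmod A \<Phi> B) x y) r = madd (qmod A \<Phi> B) (mact (qmod A \<Phi> B) x r) (mact (qmod A \<Phi> B) y r)"
      using \<open>r \<in> carrier R\<close> by (simp add: h_add h_act act_add)
  next
    fix x r s assume "x \<in> B" "r \<in> carrier R" "s \<in> carrier R"
    then obtain a where "a \<in> mcar A" "x = \<Phi> a" using ex[of x] by blast
    then show "mact (qmod A \<Phi> B) x (r \<oplus>\<^bsub>R\<^esub> s) = madd (qmod A \<Phi> B) (mact (qmod A \<Phi> B) x r) (mact (qmod A \<Phi> B) x s)"
      using \<open>r \<in> carrier R\<close> \<open>s \<in> carrier R\<close> ring
      by (simp add: h_add h_act act_radd ring.ring_simprules(1))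
  next
    fix x r s assume "x \<in> B" "r \<in> carrier R" "s \<in> carrier R"
    then obtain a where "a \<in> mcar A" "x = \<Phi> a" using ex[of x] by blast
    then show "mact (qmod A \<Phi> B) x (r \<otimes>\<^bsub>R\<^esub> s) = mact (qmod A \<Phi> B) (mact (qmod A \<Phi> B) x r) s"
      using \<open>r \<in> carrier R\<close> \<open>s \<in> carrier R\<close> ring
      by (simp add: h_act act_mult ring.ring_simprules(5))
  next
    fix x assume "x \<in> B"
    then obtain a where "a \<in> mcar A" "x = \<Phi> a" using ex[of x] by blast
    then show "mact (qmod A \<Phi> B) x \<one>\<^bsub>R\<^esub> = x"
      using ring by (simp add: h_act act_one ring.ring_simprules(6))
  qed
qed
end


lemma submod_img:
  assumes "rmodule R A" "rmodule R X" "rhom R A X i" "submod R A C"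
  shows "submod R X (i ` C)"
proof -
  interpret A: rm R A by (rule rm.intro) fact
  interpret X: rm R X by (rule rm.intro) fact
  have CA: "C \<subseteq> mcar A" using assms(4) unfolding submod_def by blast
  show ?thesis unfolding submod_def
  proof (intro conjI ballI)
    show "i ` C \<subseteq> mcar X" using CA rhom_closed[OF assms(3)] by blast
    show "mzero X \<in> i ` C" using assms(4) rhom_zero[OF assms(1-3)] unfolding submod_def by force
  next
    fix x y assume "x \<in> i ` C" "y \<in> i ` C"
    then obtain a b where "a \<in> C" "b \<in> C" "x = i a" "y = i b" by blast
    then show "madd X x y \<in> i ` C" using assms(4) CA rhom_add[OF assms(3), of a b]
      unfolding submod_def by (metis image_eqI subsetD)
  next
    fix x assume "x \<in> i ` C"
    then obtain a where "a \<in> C" "x = i a" by blast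
    then show "mneg X x \<in> i ` C" using assms(4) CA rhom_neg[OF assms(1-3), of a]
      unfolding submod_def by (metis image_eqI subsetD)
  next
    fix x r assume "x \<in> i ` C" "r \<in> carrier R"
    then obtain a where "a \<in> C" "x = i a" by blast
    then show "mact X x r \<in> i ` C" using assms(4) CA rhom_act[OF assms(3), of a r] \<open>r \<in> carrier R\<close>
      unfolding submod_def by (metis image_eqI subsetD)
  qed
qed

lemma submod_pre:
  assumes "rmodule R A" "rmodule R X" "rhom R A X i" "submod R X S"
  shows "submod R A {a \<in> mcar A. i a \<in> S}"
proof -
  interpret A: rm R A by (rule rm.intro) fact
  interpret X: rm R X by (rule rm.intro) fact
  show ?thesis using assms(4) unfolding submod_def
    by (auto simp: rhom_zero[OF assms(1-3)] rhom_add[OF assms(3)] rhom_neg[OF assms(1-3)]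
        rhom_act[OF assms(3)])
qed

lemma submod_car: "submod R A S \<Longrightarrow> S \<subseteq> mcar A" unfolding submod_def by blast
lemma submod_zero: "submod R A S \<Longrightarrow> mzero A \<in> S" unfolding submod_def by blast
lemma submod_add: "submod R A S \<Longrightarrow> x \<in> S \<Longrightarrow> y \<in> S \<Longrightarrow> madd A x y \<in> S" unfolding submod_def by blast
lemma submod_neg: "submod R A S \<Longrightarrow> x \<in> S \<Longrightarrow> mneg A x \<in> S" unfolding submod_def by blast

lemma img_step:
  assumes "rmodule R A" "rmodule R X" "rhom R A X i" "inj_on i (mcar A)"
    and "submod R A C" "submod R A C'" "C \<subset> C'" "\<not> (\<exists>S. submod R A S \<and> C \<subset> S \<and> S \<subset> C')"
  shows "i ` C \<subset> i ` C' \<and> \<not> (\<exists>S. submod R X S \<and> i ` C \<subset> S \<and> S \<subset> i ` C')"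
proof
  have CA: "C \<subseteq> mcar A" "C' \<subseteq> mcar A" using assms(5,6) submod_car by blast+
  show "i ` C \<subset> i ` C'" using assms(4,7) CA by (metis image_mono inj_on_image_eq_iff psubset_eq)
  show "\<not> (\<exists>S. submod R X S \<and> i ` C \<subset> S \<and> S \<subset> i ` C')"
  proof
    assume "\<exists>S. submod R X S \<and> i ` C \<subset> S \<and> S \<subset> i ` C'"
    then obtain S where S: "submod R X S" "i ` C \<subset> S" "S \<subset> i ` C'" by blast
    define S' where "S' = {a \<in> mcar A. i a \<in> S}"
    have sm: "submod R A S'" unfolding S'_def by (rule submod_pre[OF assms(1-3) S(1)])
    have "S = i ` S'" using S CA unfolding S'_def by blast
    have "C \<subseteq> S'" using S CA unfolding S'_def by blast
    moreover have "S' \<subseteq> C'"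
    proof
      fix a assume "a \<in> S'"
      then have "a \<in> mcar A" "i a \<in> i ` C'" using S unfolding S'_def by blast+
      then show "a \<in> C'" using assms(4) CA by (metis imageE inj_on_def subsetD)
    qed
    ultimately have "C \<subset> S' \<and> S' \<subset> C'" using S \<open>S = i ` S'\<close> by blast
    then show False using assms(8) sm by blast
  qed
qed

lemma pre_step:
  assumes "rmodule R X" "rmodule R B" "rhom R X B p" "p ` mcar X = mcar B"
    and "submod R B D" "submod R B D'" "D \<subset> D'" "\<not> (\<exists>S. submod R B S \<and> D \<subset> S \<and> S \<subset> D')"
  shows "{x \<in> mcar X. p x \<in> D} \<subset> {x \<in> mcar X. p x \<in> D'} \<and>
     \<not> (\<exists>S. submod R X S \<and> {x \<in> mcar X. p x \<in> D} \<subset> S \<and> S \<subset> {x \<in> mcar X. p x \<in> D'})"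
proof
  interpret X: rm R X by (rule rm.intro) fact
  interpret B: rm R B by (rule rm.intro) fact
  have DB: "D \<subseteq> mcar B" "D' \<subseteq> mcar B" using assms(5,6) submod_car by blast+
  show "{x \<in> mcar X. p x \<in> D} \<subset> {x \<in> mcar X. p x \<in> D'}"
  proof -
    obtain d where d: "d \<in> D'" "d \<notin> D" using assms(7) by blast
    then obtain x where "x \<in> mcar X" "p x = d" using assms(4) DB by (metis imageE subsetD)
    then show ?thesis using d assms(7) by blast
  qed
  show "\<not> (\<exists>S. submod R X S \<and> {x \<in> mcar X. p x \<in> D} \<subset> S \<and> S \<subset> {x \<in> mcar X. p x \<in> D'})"
  proof
    assume "\<exists>S. submod R X S \<and> {x \<in> mcar X. p x \<in> D} \<subset> S \<and> S \<subset> {x \<in> mcar X. p x \<in> D'}"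
    then obtain S where S: "submod R X S" "{x \<in> mcar X. p x \<in> D} \<subset> S" "S \<subset> {x \<in> mcar X. p x \<in> D'}" by blast
    have SX: "S \<subseteq> mcar X" using S(1) submod_car by blast
    have sm: "submod R B (p ` S)" by (rule submod_img[OF assms(1-3) S(1)])
    have "D \<subseteq> p ` S"
    proof
      fix d assume "d \<in> D"
      then obtain x where "x \<in> mcar X" "p x = d" using assms(4) DB by (metis imageE subsetD)
      then show "d \<in> p ` S" using S(2) \<open>d \<in> D\<close> by blast
    qed
    moreover have "p ` S \<subseteq> D'" using S(3) by blast
    moreover have "p ` S \<noteq> D"
    proof
      assume "p ` S = D"
      then have "S \<subseteq> {x \<in> mcar X. p x \<in> D}" using SX by blast
      then show False using S(2) by blast
    qed
    moreover have "p ` S \<noteq> D'"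
    proof
      assume e: "p ` S = D'"
      have "{x \<in> mcar X. p x \<in> D'} \<subseteq> S"
      proof
        fix x assume x: "x \<in> {x \<in> mcar X. p x \<in> D'}"
        then obtain s where s: "s \<in> S" "p x = p s" using e by (metis (no_types, lifting) imageE mem_Collect_eq)
        have sX: "s \<in> mcar X" using s SX by blast
        have "p (madd X x (mneg X s)) = mzero B"
          using x sX s rhom_add[OF assms(3)] rhom_neg[OF assms(1-3)] rhom_closed[OF assms(3)] by simp
        then have "madd X x (mneg X s) \<in> {x \<in> mcar X. p x \<in> D}" using x sX submod_zero[OF assms(5)] by simp
        then have "madd X x (mneg X s) \<in> S" using S(2) by blast
        then have "madd X (madd X x (mneg X s)) s \<in> S" using s submod_add[OF S(1)] by blast
        then show "x \<in> S" using x sX by (simp add: X.assoc)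
      qed
      then show False using S(3) by blast
    qed
    ultimately have "D \<subset> p ` S \<and> p ` S \<subset> D'" by blast
    then show False using assms(8) sm by blast
  qed
qed

lemma ext_finite_length:
  assumes ses: "ses R A X B i p" and fA: "finite_length R A" and fB: "finite_length R B"
    and mX: "rmodule R X"
  shows "finite_length R X"
proof -
  note mA = fl_rmod[OF fA] and mB = fl_rmod[OF fB]
  interpret A: rm R A by (rule rm.intro) fact
  interpret X: rm R X by (rule rm.intro) fact
  interpret B: rm R B by (rule rm.intro) fact
  have hi: "rhom R A X i" and hp: "rhom R X B p" and inj: "inj_on i (mcar A)"
    and sur: "p ` mcar X = mcar B" and ker: "{x \<in> mcar X. p x = mzero B} = i ` mcar A"
    using ses by (simp_all add: ses_def)
  obtain n C where C: "C 0 = {mzero A}" "C n = mcar A" "\<forall>k\<le>n. submod R A (C k)"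
    "\<forall>k<n. C k \<subset> C (Suc k) \<and> \<not> (\<exists>S. submod R A S \<and> C k \<subset> S \<and> S \<subset> C (Suc k))"
  proof -
    have "\<exists>n C. C 0 = {mzero A} \<and> C n = mcar A \<and> (\<forall>k\<le>n. submod R A (C k)) \<and>
    (\<forall>k<n. C k \<subset> C (Suc k) \<and> \<not> (\<exists>S. submod R A S \<and> C k \<subset> S \<and> S \<subset> C (Suc k)))"
      using fA unfolding finite_length_def by (rule conjunct2)
    then show ?thesis apply (elim exE conjE) apply (rule that) by assumption+
  qed
  obtain m D where D: "D 0 = {mzero B}" "D m = mcar B" "\<forall>k\<le>m. submod R B (D k)"
    "\<forall>k<m. D k \<subset> D (Suc k) \<and> \<not> (\<exists>S. submod R B S \<and> D k \<subset> S \<and> S \<subset> D (Suc k))"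
  proof -
    have "\<exists>m D. D 0 = {mzero B} \<and> D m = mcar B \<and> (\<forall>k\<le>m. submod R B (D k)) \<and>
    (\<forall>k<m. D k \<subset> D (Suc k) \<and> \<not> (\<exists>S. submod R B S \<and> D k \<subset> S \<and> S \<subset> D (Suc k)))"
      using fB unfolding finite_length_def by (rule conjunct2)
    then show ?thesis apply (elim exE conjE) apply (rule that) by assumption+
  qed
  define Z where "Z k = (if k \<le> n then i ` C k else {x \<in> mcar X. p x \<in> D (k - n)})" for k
  have Zn: "Z n = {x \<in> mcar X. p x \<in> D 0}" unfolding Z_def using C(2) D(1) ker by simp
  have Zge: "n \<le> k \<Longrightarrow> Z k = {x \<in> mcar X. p x \<in> D (k - n)}" for k
    using Zn unfolding Z_def by (cases "k = n") auto
  have "Z 0 = {mzero X}" unfolding Z_def using C(1) rhom_zero[OF mA mX hi] by simp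
  moreover have "Z (n + m) = mcar X" using Zge[of "n+m"] D(2) rhom_closed[OF hp] by auto
  moreover have "\<forall>k\<le>n+m. submod R X (Z k)"
  proof (intro allI impI)
    fix k assume "k \<le> n + m"
    show "submod R X (Z k)"
    proof (cases "k \<le> n")
      case True then show ?thesis unfolding Z_def using submod_img[OF mA mX hi] C(3) by simp
    next
      case False then show ?thesis using Zge[of k] submod_pre[OF mX mB hp] D(3) \<open>k \<le> n + m\<close> by simp
    qed
  qed
  moreover have "\<forall>k<n+m. Z k \<subset> Z (Suc k) \<and> \<not> (\<exists>S. submod R X S \<and> Z k \<subset> S \<and> S \<subset> Z (Suc k))"
  proof (intro allI impI)
    fix k assume k: "k < n + m"
    show "Z k \<subset> Z (Suc k) \<and> \<not> (\<exists>S. submod R X S \<and> Z k \<subset> S \<and> S \<subset> Z (Suc k))"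
    proof (cases "k < n")
      case True
      then have "Z k = i ` C k" "Z (Suc k) = i ` C (Suc k)" unfolding Z_def by auto
      then show ?thesis using img_step[OF mA mX hi inj, of "C k" "C (Suc k)"] C(3,4) True by simp
    next
      case False
      then have "Z k = {x \<in> mcar X. p x \<in> D (k - n)}" "Z (Suc k) = {x \<in> mcar X. p x \<in> D (Suc (k - n))}"
        using Zge[of k] Zge[of "Suc k"] by (auto simp: Suc_diff_le)
      moreover have "k - n < m" using k False by simp
      ultimately show ?thesis using pre_step[OF mX mB hp sur, of "D (k - n)" "D (Suc (k - n))"] D(3,4)
        by simp
    qed
  qed
  ultimately show ?thesis unfolding finite_length_def using mX by (intro conjI exI) assumption+
qed

context rm begin
lemma canc2: "x \<in> mcar M \<Longrightarrow> a \<in> mcar M \<Longrightarrow> madd M x (madd M a (mneg M x)) = a"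
  by (simp add: lcomm[of x a])
lemma canc3: "x \<in> mcar M \<Longrightarrow> a \<in> mcar M \<Longrightarrow> b \<in> mcar M \<Longrightarrow> madd M x (madd M a (madd M b (mneg M x))) = madd M a b"
  by (simp add: lcomm[of x a] canc2)
lemma canc4: "x \<in> mcar M \<Longrightarrow> a \<in> mcar M \<Longrightarrow> b \<in> mcar M \<Longrightarrow> c \<in> mcar M \<Longrightarrow> madd M x (madd M a (madd M b (madd M c (mneg M x)))) = madd M a (madd M b c)"
  by (simp add: lcomm[of x a] canc3)
lemmas canc = canc2 canc3 canc4
end

lemma prod_mod_simps[simp]:
  "mcar (prod_mod A B) = mcar A \<times> mcar B"
  "madd (prod_mod A B) x y = (madd A (fst x) (fst y), madd B (snd x) (snd y))"
  "mzero (prod_mod A B) = (mzero A, mzero B)"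
  "mneg (prod_mod A B) x = (mneg A (fst x), mneg B (snd x))"
  "mact (prod_mod A B) x r = (mact A (fst x) r, mact B (snd x) r)"
  by (simp_all add: prod_mod_def)


lemma sesD:
  assumes "ses R A X B i p"
  shows "rhom R A X i" "rhom R X B p" "inj_on i (mcar A)" "p ` mcar X = mcar B"
    "{x \<in> mcar X. p x = mzero B} = i ` mcar A"
  using assms unfolding ses_def by simp_all

lemma pushout:
  fixes T :: "('t,'r) rmod" and M :: "('m,'r) rmod" and T2 :: "('b,'r) rmod" and F :: "('f,'r) rmod"
  assumes fT: "finite_length R T" and fM: "finite_length R M" and mT2: "rmodule R T2"
    and mF: "rmodule R F" and ses: "ses R T2 F M j q" and hpi: "rhom R T2 T \<pi>"
  shows "\<exists>(X::('t \<times> 'm,'r) rmod) jX qX \<psi>. finite_length R X \<and> ses R T X M jX qX \<and> rhom R F X \<psi> \<and>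
     (\<forall>b\<in>mcar T2. \<psi> (j b) = jX (\<pi> b)) \<and> (\<forall>f\<in>mcar F. qX (\<psi> f) = q f)"
proof -
  note mT = fl_rmod[OF fT] and mM = fl_rmod[OF fM]
  interpret T: rm R T by (rule rm.intro) fact
  interpret M: rm R M by (rule rm.intro) fact
  interpret T2: rm R T2 by (rule rm.intro) fact
  interpret F: rm R F by (rule rm.intro) fact
  note hj = sesD(1)[OF ses] and hq = sesD(2)[OF ses] and inj = sesD(3)[OF ses]
    and sur = sesD(4)[OF ses] and ker = sesD(5)[OF ses]
  note jc = rhom_closed[OF hj] and qc = rhom_closed[OF hq] and pc = rhom_closed[OF hpi]
  note ja = rhom_add[OF hj] and qa = rhom_add[OF hq] and pa = rhom_add[OF hpi]
  note jn = rhom_neg[OF mT2 mF hj] and qn = rhom_neg[OF mF mM hq] and pn = rhom_neg[OF mT2 mT hpi]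
  note j0 = rhom_zero[OF mT2 mF hj] and q0 = rhom_zero[OF mF mM hq] and p0 = rhom_zero[OF mT2 mT hpi]
  note jr = rhom_act[OF hj] and qr = rhom_act[OF hq] and pr = rhom_act[OF hpi]
  have qj: "q (j b) = mzero M" if b: "b \<in> mcar T2" for b
  proof -
    have "j b \<in> {x \<in> mcar F. q x = mzero M}" unfolding ker using b by (rule imageI)
    then show ?thesis by simp
  qed
  define s where "s m = (SOME f. f \<in> mcar F \<and> q f = m)" for m
  have s: "m \<in> mcar M \<Longrightarrow> s m \<in> mcar F \<and> q (s m) = m" for m
  proof -
    assume "m \<in> mcar M"
    then have "m \<in> q ` mcar F" using sur by simp
    then obtain f where "f \<in> mcar F" "q f = m" by (elim imageE) simp
    then show ?thesis unfolding s_def by (intro someI_ex[of "\<lambda>f. f \<in> mcar F \<and> q f = m"]) blast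
  qed
  define \<beta> where "\<beta> y = (SOME b. b \<in> mcar T2 \<and> j b = y)" for y
  have \<beta>: "y \<in> mcar F \<Longrightarrow> q y = mzero M \<Longrightarrow> \<beta> y \<in> mcar T2 \<and> j (\<beta> y) = y" for y
  proof -
    assume "y \<in> mcar F" "q y = mzero M"
    then have "y \<in> j ` mcar T2" using ker by (metis (mono_tags, lifting) mem_Collect_eq)
    then obtain b where "b \<in> mcar T2" "j b = y" by (elim imageE) simp
    then show ?thesis unfolding \<beta>_def by (intro someI_ex[of "\<lambda>b. b \<in> mcar T2 \<and> j b = y"]) blast
  qed
  have \<beta>u: "b \<in> mcar T2 \<Longrightarrow> y \<in> mcar F \<Longrightarrow> q y = mzero M \<Longrightarrow> j b = y \<Longrightarrow> \<beta> y = b" for b y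
    using \<beta>[of y] inj by (metis inj_onD)
  define A where "A = prod_mod T F"
  have mA: "rmodule R A" unfolding A_def by (rule prod_mod_rmodule[OF mT mF])
  have carA: "mcar A = mcar T \<times> mcar F" unfolding A_def prod_mod_def by simp
  define d where "d (u::'t \<times> 'f) = madd F (snd u) (mneg F (s (q (snd u))))" for u
  have d: "u \<in> mcar A \<Longrightarrow> d u \<in> mcar F \<and> q (d u) = mzero M" for u
  proof -
    assume "u \<in> mcar A"
    then have u: "snd u \<in> mcar F" unfolding carA by auto
    then have "q (snd u) \<in> mcar M" using qc by blast
    then show ?thesis unfolding d_def using s[of "q (snd u)"] u by (simp add: qa qn)
  qed
  define \<Phi> where "\<Phi> u = (madd T (fst u) (\<pi> (\<beta> (d u))), q (snd u))" for u
  have rel: "\<Phi> u = \<Phi> v \<longleftrightarrow> (\<exists>b\<in>mcar T2. fst v = madd T (fst u) (\<pi> b) \<and> snd v = madd F (snd u) (mneg F (j b)))"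
    if u: "u \<in> mcar A" and v: "v \<in> mcar A" for u v
  proof -
    have u1: "fst u \<in> mcar T" "snd u \<in> mcar F" and v1: "fst v \<in> mcar T" "snd v \<in> mcar F"
      using u v unfolding carA by (simp_all add: mem_Times_iff)
    define c where "c = \<beta> (d u)"
    define c' where "c' = \<beta> (d v)"
    have c: "c \<in> mcar T2" "j c = d u" using \<beta> d u unfolding c_def by blast+
    have c': "c' \<in> mcar T2" "j c' = d v" using \<beta> d v unfolding c'_def by blast+
    have mq: "q (snd u) \<in> mcar M" using qc u1 by blast
    show ?thesis
    proof
      assume e: "\<Phi> u = \<Phi> v"
      then have qe: "q (snd v) = q (snd u)" and te: "madd T (fst u) (\<pi> c) = madd T (fst v) (\<pi> c')"
        unfolding \<Phi>_def c_def c'_def by simp_all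
      define b where "b = madd T2 c (mneg T2 c')"
      have b: "b \<in> mcar T2" unfolding b_def using c c' by simp
      have "fst v = madd T (fst u) (\<pi> b)"
      proof -
        have "fst v = madd T (madd T (fst v) (\<pi> c')) (mneg T (\<pi> c'))" using v1 c' pc by (simp add: T.ac T.canc)
        also have "\<dots> = madd T (madd T (fst u) (\<pi> c)) (mneg T (\<pi> c'))" using te by simp
        also have "\<dots> = madd T (fst u) (\<pi> b)" unfolding b_def using c c' u1 pc
          by (simp add: pa pn T.ac)
        finally show ?thesis .
      qed
      moreover have "snd v = madd F (snd u) (mneg F (j b))"
      proof -
        have "madd F (snd u) (mneg F (j b)) = madd F (snd u) (madd F (mneg F (j c)) (j c'))"
          unfolding b_def using c c' jc d[OF u] d[OF v] by (simp add: ja jn F.neg_distrib)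
        also have "\<dots> = madd F (snd u) (madd F (mneg F (d u)) (d v))" using c c' by simp
        also have "\<dots> = snd v" unfolding d_def using qe u1 v1 s[OF mq]
          by (simp add: F.ac F.neg_distrib F.canc)
        finally show ?thesis by simp
      qed
      ultimately show "\<exists>b\<in>mcar T2. fst v = madd T (fst u) (\<pi> b) \<and> snd v = madd F (snd u) (mneg F (j b))"
        using b by blast
    next
      assume "\<exists>b\<in>mcar T2. fst v = madd T (fst u) (\<pi> b) \<and> snd v = madd F (snd u) (mneg F (j b))"
      then obtain b where b: "b \<in> mcar T2" "fst v = madd T (fst u) (\<pi> b)"
        "snd v = madd F (snd u) (mneg F (j b))" by blast
      have qe: "q (snd v) = q (snd u)" using b u1 jc qc by (simp add: qa qn qj)
      have "j (madd T2 c (mneg T2 b)) = d v"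
        using c b jc u1 s[OF mq] unfolding d_def qe by (simp add: ja jn F.ac)
      then have "c' = madd T2 c (mneg T2 b)" unfolding c'_def using b c d v
        by (intro \<beta>u) simp_all
      then show "\<Phi> u = \<Phi> v" unfolding \<Phi>_def c_def[symmetric] c'_def[symmetric] using qe b c u1 pc
        by (simp add: pa pn T.ac T.canc)
    qed
  qed
  have p0': "\<pi> (mzero T2) = mzero T" by (rule p0)
  have \<beta>0: "\<beta> (mzero F) = mzero T2" using j0 q0 by (intro \<beta>u) simp_all
  have Phis: "\<Phi> (t, s m) = (t, m)" if t: "t \<in> mcar T" and m: "m \<in> mcar M" for t m
    unfolding \<Phi>_def d_def using s[OF m] t by (simp add: \<beta>0 p0)
  have Acar: "u \<in> mcar A \<Longrightarrow> fst u \<in> mcar T \<and> snd u \<in> mcar F" for u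
    unfolding carA by (simp add: mem_Times_iff)
  interpret A: rm R A by (rule rm.intro) fact
  have madA: "madd A u v = (madd T (fst u) (fst v), madd F (snd u) (snd v))" for u v
    unfolding A_def by simp
  have mnA: "mneg A u = (mneg T (fst u), mneg F (snd u))" for u unfolding A_def by simp
  have maA: "mact A u r = (mact T (fst u) r, mact F (snd u) r)" for u r unfolding A_def by simp
  have mzA: "mzero A = (mzero T, mzero F)" unfolding A_def by simp
  interpret Q: qm R A \<Phi> "mcar T \<times> mcar M"
  proof (unfold_locales)
    fix u assume u: "u \<in> mcar A"
    then show "\<Phi> u \<in> mcar T \<times> mcar M" unfolding \<Phi>_def using Acar[OF u] \<beta> d[OF u] pc qc
      by (simp add: mem_Times_iff)
  next
    fix x assume x: "x \<in> mcar T \<times> mcar M"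
    then have "(fst x, s (snd x)) \<in> mcar A" "\<Phi> (fst x, s (snd x)) = x"
      using s[of "snd x"] Phis[of "fst x" "snd x"] unfolding carA by (simp_all add: mem_Times_iff)
    then show "\<exists>u\<in>mcar A. \<Phi> u = x" by blast
  next
    fix u v u' v' assume a: "u \<in> mcar A" "v \<in> mcar A" "u' \<in> mcar A" "v' \<in> mcar A"
      "\<Phi> u = \<Phi> u'" "\<Phi> v = \<Phi> v'"
    obtain b where b: "b \<in> mcar T2" "fst u' = madd T (fst u) (\<pi> b)" "snd u' = madd F (snd u) (mneg F (j b))"
      using rel[OF a(1,3)] a(5) by blast
    obtain b' where b': "b' \<in> mcar T2" "fst v' = madd T (fst v) (\<pi> b')" "snd v' = madd F (snd v) (mneg F (j b'))"
      using rel[OF a(2,4)] a(6) by blast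
    have f1: "fst (madd A u' v') = madd T (fst (madd A u v)) (\<pi> (madd T2 b b'))"
      unfolding madA using b b' Acar[OF a(1)] Acar[OF a(2)] pc by (simp add: pa T.ac)
    have f2: "snd (madd A u' v') = madd F (snd (madd A u v)) (mneg F (j (madd T2 b b')))"
      unfolding madA using b b' Acar[OF a(1)] Acar[OF a(2)] jc by (simp add: ja F.neg_distrib F.ac)
    have "madd T2 b b' \<in> mcar T2" using b b' by simp
    then show "\<Phi> (madd A u v) = \<Phi> (madd A u' v')"
      unfolding rel[OF A.add_closed[OF a(1,2)] A.add_closed[OF a(3,4)]] using f1 f2 by blast
  next
    fix u u' assume a: "u \<in> mcar A" "u' \<in> mcar A" "\<Phi> u = \<Phi> u'"
    obtain b where b: "b \<in> mcar T2" "fst u' = madd T (fst u) (\<pi> b)" "snd u' = madd F (snd u) (mneg F (j b))"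
      using rel[OF a(1,2)] a(3) by blast
    have f1: "fst (mneg A u') = madd T (fst (mneg A u)) (\<pi> (mneg T2 b))"
      unfolding mnA using b Acar[OF a(1)] pc by (simp add: pn T.neg_distrib)
    have f2: "snd (mneg A u') = madd F (snd (mneg A u)) (mneg F (j (mneg T2 b)))"
      unfolding mnA using b Acar[OF a(1)] jc by (simp add: jn F.neg_distrib)
    have "mneg T2 b \<in> mcar T2" using b by simp
    then show "\<Phi> (mneg A u) = \<Phi> (mneg A u')"
      unfolding rel[OF A.neg_closed[OF a(1)] A.neg_closed[OF a(2)]] using f1 f2 by blast
  next
    fix u u' r assume a: "u \<in> mcar A" "u' \<in> mcar A" "r \<in> carrier R" "\<Phi> u = \<Phi> u'"
    obtain b where b: "b \<in> mcar T2" "fst u' = madd T (fst u) (\<pi> b)" "snd u' = madd F (snd u) (mneg F (j b))"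
      using rel[OF a(1,2)] a(4) by blast
    have f1: "fst (mact A u' r) = madd T (fst (mact A u r)) (\<pi> (mact T2 b r))"
      unfolding maA using b Acar[OF a(1)] pc a(3) by (simp add: pr T.act_add)
    have f2: "snd (mact A u' r) = madd F (snd (mact A u r)) (mneg F (j (mact T2 b r)))"
      unfolding maA using b Acar[OF a(1)] jc a(3) by (simp add: jr F.act_add F.act_neg)
    have "mact T2 b r \<in> mcar T2" using b a(3) by simp
    then show "\<Phi> (mact A u r) = \<Phi> (mact A u' r)"
      unfolding rel[OF A.act_closed[OF a(1,3)] A.act_closed[OF a(2,3)]] using f1 f2 by blast
  qed
  define X where "X = qmod A \<Phi> (mcar T \<times> mcar M)"
  have mX: "rmodule R X" unfolding X_def by (rule Q.q_rmodule)
  have hPhi: "rhom R A X \<Phi>" unfolding X_def by (rule Q.q_hom)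
  have carX: "mcar X = mcar T \<times> mcar M" unfolding X_def by simp
  interpret X: rm R X by (rule rm.intro) fact
  define jX where "jX t = \<Phi> (t, mzero F)" for t
  define \<psi> where "\<psi> f = \<Phi> (mzero T, f)" for f
  have hin1: "rhom R T A (\<lambda>t. (t, mzero F))" unfolding rhom_def carA madA maA
    by (simp add: mem_Times_iff)
  have hin2: "rhom R F A (\<lambda>f. (mzero T, f))" unfolding rhom_def carA madA maA
    by (simp add: mem_Times_iff)
  have hjX: "rhom R T X jX" unfolding jX_def by (rule rhom_comp[OF hin1 hPhi])
  have hpsi: "rhom R F X \<psi>" unfolding \<psi>_def by (rule rhom_comp[OF hin2 hPhi])
  have sndPhi: "snd (\<Phi> u) = q (snd u)" for u unfolding \<Phi>_def by simp
  have exu: "\<exists>u\<in>mcar A. x = \<Phi> u" if "x \<in> mcar X" for x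
    using Q.onto[of x] that carX by metis
  have hqX: "rhom R X M snd" unfolding rhom_def
  proof (intro conjI ballI)
    fix x assume "x \<in> mcar X" then show "snd x \<in> mcar M" unfolding carX by (simp add: mem_Times_iff)
  next
    fix x y assume x: "x \<in> mcar X" and y: "y \<in> mcar X"
    obtain u where u: "u \<in> mcar A" "x = \<Phi> u" using exu[OF x] by blast
    obtain v where v: "v \<in> mcar A" "y = \<Phi> v" using exu[OF y] by blast
    have "madd X x y = \<Phi> (madd A u v)" using u v rhom_add[OF hPhi] by simp
    then show "snd (madd X x y) = madd M (snd x) (snd y)"
      using u v Acar[OF u(1)] Acar[OF v(1)] by (simp add: sndPhi madA qa)
  next
    fix x r assume x: "x \<in> mcar X" and r: "r \<in> carrier R"
    obtain u where u: "u \<in> mcar A" "x = \<Phi> u" using exu[OF x] by blast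
    have "mact X x r = \<Phi> (mact A u r)" using u r rhom_act[OF hPhi] by simp
    then show "snd (mact X x r) = mact M (snd x) r"
      using u r Acar[OF u(1)] by (simp add: sndPhi maA qr)
  qed
  have Aab: "(a, b) \<in> mcar A" if "a \<in> mcar T" "b \<in> mcar F" for a b
    using that unfolding carA by simp
  have injX: "inj_on jX (mcar T)"
  proof (rule inj_onI)
    fix t t' assume t: "t \<in> mcar T" and t': "t' \<in> mcar T" and e: "jX t = jX t'"
    then obtain b where b: "b \<in> mcar T2" "t' = madd T t (\<pi> b)" "mzero F = madd F (mzero F) (mneg F (j b))"
      using rel[OF Aab[OF t F.zero_closed] Aab[OF t' F.zero_closed]] unfolding jX_def by auto
    have "mneg F (j b) = mzero F" using b(3) jc[OF b(1)] by simp
    then have "j b = mzero F" using jc[OF b(1)] by (metis F.neg_closed F.neg_neg F.neg_zero)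
    then have "b = mzero T2" using inj b(1) j0 by (metis T2.zero_closed inj_onD)
    then show "t = t'" using b(2) t p0 by simp
  qed
  have surX: "snd ` mcar X = mcar M"
  proof
    show "snd ` mcar X \<subseteq> mcar M" unfolding carX by auto
    show "mcar M \<subseteq> snd ` mcar X"
    proof
      fix m assume "m \<in> mcar M"
      then have "(mzero T, m) \<in> mcar X" unfolding carX by simp
      then show "m \<in> snd ` mcar X" by (metis snd_conv image_eqI)
    qed
  qed
  have jrel: "\<Phi> (t, j b) = jX (madd T t (\<pi> b))" if t: "t \<in> mcar T" and b: "b \<in> mcar T2" for t b
  proof -
    have "\<Phi> (madd T t (\<pi> b), mzero F) = \<Phi> (t, j b)"
      unfolding rel[OF Aab[OF T.add_closed[OF t pc[OF b]] F.zero_closed] Aab[OF t jc[OF b]]]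
      using t b pc jc by (intro bexI[of _ "mneg T2 b"]) (simp_all add: pn jn T.ac)
    then show ?thesis unfolding jX_def by simp
  qed
  have kerX: "{x \<in> mcar X. snd x = mzero M} = jX ` mcar T"
  proof
    show "{x \<in> mcar X. snd x = mzero M} \<subseteq> jX ` mcar T"
    proof
      fix x assume "x \<in> {x \<in> mcar X. snd x = mzero M}"
      then have x: "fst x \<in> mcar T" "snd x = mzero M" unfolding carX by (simp_all add: mem_Times_iff)
      have s0: "s (mzero M) \<in> mcar F" "q (s (mzero M)) = mzero M" using s[of "mzero M"] by simp_all
      define b where "b = \<beta> (s (mzero M))"
      have b: "b \<in> mcar T2" "j b = s (mzero M)" using \<beta>[OF s0] unfolding b_def by simp_all
      have "x = \<Phi> (fst x, s (mzero M))" using Phis[OF x(1) M.zero_closed] x(2) by (simp add: prod_eq_iff)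
      also have "\<dots> = jX (madd T (fst x) (\<pi> b))" using jrel[OF x(1) b(1)] b(2) by simp
      finally show "x \<in> jX ` mcar T" using x(1) pc[OF b(1)] by simp
    qed
    show "jX ` mcar T \<subseteq> {x \<in> mcar X. snd x = mzero M}"
      using rhom_closed[OF hjX] unfolding jX_def by (auto simp: sndPhi q0)
  qed
  have sesX: "ses R T X M jX snd" unfolding ses_def using hjX hqX injX surX kerX by simp
  have flX: "finite_length R X" by (rule ext_finite_length[OF sesX fT fM mX])
  have "\<forall>b\<in>mcar T2. \<psi> (j b) = jX (\<pi> b)"
  proof
    fix b assume b: "b \<in> mcar T2"
    show "\<psi> (j b) = jX (\<pi> b)" unfolding \<psi>_def using jrel[OF T.zero_closed b] pc[OF b] by simp
  qed
  moreover have "\<forall>f\<in>mcar F. snd (\<psi> f) = q f" unfolding \<psi>_def by (simp add: sndPhi)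
  ultimately show ?thesis using flX sesX hpsi by blast
qed


context rm begin
lemma canc3b: "x \<in> mcar M \<Longrightarrow> a \<in> mcar M \<Longrightarrow> b \<in> mcar M \<Longrightarrow> madd M x (madd M a (madd M (mneg M x) b)) = madd M a b"
  by (simp add: lcomm[of x a])
lemma canc4b: "x \<in> mcar M \<Longrightarrow> a \<in> mcar M \<Longrightarrow> b \<in> mcar M \<Longrightarrow> c \<in> mcar M \<Longrightarrow> madd M x (madd M a (madd M b (madd M (mneg M x) c))) = madd M a (madd M b c)"
  by (simp add: lcomm[of x a] canc3b)
lemmas canc' = canc canc3b canc4b
end

lemma summand_proj:
  assumes mT: "rmodule R T" and sm: "summand R T S"
  shows "\<exists>e. rhom R T T e \<and> (\<forall>x\<in>mcar T. e x \<in> S) \<and> (\<forall>x\<in>S. e x = x)"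
proof -
  interpret T: rm R T by (rule rm.intro) fact
  obtain C where C: "submod R T C" "S \<inter> C = {mzero T}" "\<forall>x\<in>mcar T. \<exists>s\<in>S. \<exists>c\<in>C. x = madd T s c"
    using sm unfolding summand_def by blast
  have S: "submod R T S" using sm unfolding summand_def by blast
  have SC: "S \<subseteq> mcar T" "C \<subseteq> mcar T" using S C(1) submod_car by blast+
  have uniq: "s = s'" if "s \<in> S" "s' \<in> S" "c \<in> C" "c' \<in> C" "madd T s c = madd T s' c'" for s s' c c'
  proof -
    have m: "s \<in> mcar T" "s' \<in> mcar T" "c \<in> mcar T" "c' \<in> mcar T" using that SC by blast+
    have "madd T s (mneg T s') = madd T c' (mneg T c)"
    proof -
      have "madd T (madd T s c) (madd T (mneg T s') (mneg T c)) = madd T (madd T s' c') (madd T (mneg T s') (mneg T c))"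
        using that(5) by simp
      then show ?thesis using m by (simp add: T.ac T.canc')
    qed
    moreover have "madd T s (mneg T s') \<in> S" using that S by (simp add: submod_add submod_neg)
    moreover have "madd T c' (mneg T c) \<in> C" using that C(1) by (simp add: submod_add submod_neg)
    ultimately have "madd T s (mneg T s') = mzero T" using C(2) by (metis IntI singletonD)
    then show "s = s'" using m T.eq_iff_diff by blast
  qed
  define e where "e x = (SOME s. s \<in> S \<and> (\<exists>c\<in>C. x = madd T s c))" for x
  have e: "e x \<in> S \<and> (\<exists>c\<in>C. x = madd T (e x) c)" if "x \<in> mcar T" for x
    unfolding e_def by (rule someI_ex) (use C(3) that in blast)
  have eu: "e x = s" if "x \<in> mcar T" "s \<in> S" "c \<in> C" "x = madd T s c" for x s c
    using e[OF that(1)] uniq that by metis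
  have hom: "rhom R T T e" unfolding rhom_def
  proof (intro conjI ballI)
    fix x assume "x \<in> mcar T" then show "e x \<in> mcar T" using e SC by blast
  next
    fix x y assume x: "x \<in> mcar T" and y: "y \<in> mcar T"
    obtain c where c: "c \<in> C" "x = madd T (e x) c" using e[OF x] by blast
    obtain d where d: "d \<in> C" "y = madd T (e y) d" using e[OF y] by blast
    have m: "e x \<in> mcar T" "e y \<in> mcar T" "c \<in> mcar T" "d \<in> mcar T" using e x y c d SC by blast+
    have "madd T x y = madd T (madd T (e x) c) (madd T (e y) d)" by (rule arg_cong2[where f="madd T", OF c(2) d(2)])
    also have "\<dots> = madd T (madd T (e x) (e y)) (madd T c d)" using m by (simp add: T.ac)
    finally have "madd T x y = madd T (madd T (e x) (e y)) (madd T c d)" .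
    moreover have "e x \<in> S" "e y \<in> S" using e x y by blast+
    ultimately show "e (madd T x y) = madd T (e x) (e y)"
      using x y c(1) d(1) m by (intro eu[where c="madd T c d"]) (simp_all add: submod_add[OF S] submod_add[OF C(1)])
  next
    fix x r assume x: "x \<in> mcar T" and r: "r \<in> carrier R"
    obtain c where c: "c \<in> C" "x = madd T (e x) c" using e[OF x] by blast
    have m: "e x \<in> mcar T" "c \<in> mcar T" using e x c SC by blast+
    have "mact T x r = madd T (mact T (e x) r) (mact T c r)" using c m r by (metis T.act_add)
    moreover have "mact T (e x) r \<in> S" "mact T c r \<in> C" using e[OF x] c S C(1) r unfolding submod_def by blast+
    ultimately show "e (mact T x r) = mact T (e x) r" using x r m by (intro eu[where c="mact T c r"]) simp_all
  qed
  have "\<forall>x\<in>S. e x = x"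
  proof
    fix x assume "x \<in> S"
    then show "e x = x" using eu[of x x "mzero T"] SC submod_zero[OF C(1)] by auto
  qed
  then show ?thesis using hom e by blast
qed

definition inP :: "('e,'r) rmod \<Rightarrow> ('f,'r) rmod \<Rightarrow> ('e \<Rightarrow> 'm) \<Rightarrow> ('f \<Rightarrow> 'm) \<Rightarrow> 'e \<Rightarrow> 'f \<Rightarrow> bool" where
  "inP E F p q e f \<longleftrightarrow> e \<in> mcar E \<and> f \<in> mcar F \<and> p e = q f"

lemma comp_retr:
  fixes T :: "('t,'r) rmod" and M :: "('m,'r) rmod" and T2 :: "('b,'r) rmod" and F :: "('f,'r) rmod"
    and T1 :: "('a,'r) rmod" and E :: "('e,'r) rmod"
  assumes fT: "finite_length R T" and fM: "finite_length R M" and mT2: "rmodule R T2"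
    and mF: "rmodule R F" and sesF: "ses R T2 F M j q" and hpi: "rhom R T2 T \<pi>"
    and mE: "rmodule R E" and hp: "rhom R E M p"
    and univ: "\<forall>(X :: ('t \<times> 'm,'r) rmod) j q. finite_length R X \<and> ses R T X M j q \<longrightarrow>
        (\<exists>\<phi> g. rhom R T1 T \<phi> \<and> rhom R E X g \<and>
           (\<forall>t\<in>mcar T1. g (i t) = j (\<phi> t)) \<and> (\<forall>e\<in>mcar E. q (g e) = p e))"
  shows "\<exists>r. (\<forall>e f. inP E F p q e f \<longrightarrow> r (e, f) \<in> mcar T) \<and>
    (\<forall>e f e' f'. inP E F p q e f \<longrightarrow> inP E F p q e' f' \<longrightarrow>
        r (madd E e e', madd F f f') = madd T (r (e, f)) (r (e', f'))) \<and>
    (\<forall>e f s. inP E F p q e f \<longrightarrow> s \<in> carrier R \<longrightarrow> r (mact E e s, mact F f s) = mact T (r (e, f)) s) \<and>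
    (\<forall>b\<in>mcar T2. r (mzero E, j b) = \<pi> b)"
proof -
  note mT = fl_rmod[OF fT] and mM = fl_rmod[OF fM]
  interpret T: rm R T by (rule rm.intro) fact
  interpret M: rm R M by (rule rm.intro) fact
  interpret T2: rm R T2 by (rule rm.intro) fact
  interpret F: rm R F by (rule rm.intro) fact
  interpret E: rm R E by (rule rm.intro) fact
  obtain X :: "('t \<times> 'm,'r) rmod" and jX qX \<psi> where X: "finite_length R X" "ses R T X M jX qX" "rhom R F X \<psi>"
    "\<forall>b\<in>mcar T2. \<psi> (j b) = jX (\<pi> b)" "\<forall>f\<in>mcar F. qX (\<psi> f) = q f"
    using pushout[OF fT fM mT2 mF sesF hpi] by blast
  obtain \<phi> g where g: "rhom R E X g" "\<forall>e\<in>mcar E. qX (g e) = p e"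
    using univ X(1,2) by blast
  note mX = fl_rmod[OF X(1)]
  interpret X: rm R X by (rule rm.intro) fact
  note hj = sesD(1)[OF sesF] and hq = sesD(2)[OF sesF]
  note hjX = sesD(1)[OF X(2)] and hqX = sesD(2)[OF X(2)] and injX = sesD(3)[OF X(2)]
    and kerX = sesD(5)[OF X(2)]
  define w where "w e f = madd X (\<psi> f) (mneg X (g e))" for e f
  have wc: "w e f \<in> mcar X" if "inP E F p q e f" for e f
    using that rhom_closed[OF X(3)] rhom_closed[OF g(1)] unfolding w_def inP_def by simp
  have wk: "qX (w e f) = mzero M" if "inP E F p q e f" for e f
    using that rhom_closed[OF X(3)] rhom_closed[OF g(1)] X(5) g(2) rhom_closed[OF hp] rhom_closed[OF hq]
    unfolding w_def inP_def by (simp add: rhom_add[OF hqX] rhom_neg[OF mX mM hqX])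
  define r where "r ef = (SOME t. t \<in> mcar T \<and> jX t = w (fst ef) (snd ef))" for ef
  have r: "r (e, f) \<in> mcar T \<and> jX (r (e, f)) = w e f" if "inP E F p q e f" for e f
  proof -
    have "w e f \<in> {x \<in> mcar X. qX x = mzero M}" using wc[OF that] wk[OF that] by simp
    then have "w e f \<in> jX ` mcar T" unfolding kerX .
    then obtain t where "t \<in> mcar T" "jX t = w e f" by (elim imageE) simp
    then have "\<exists>t. t \<in> mcar T \<and> jX t = w e f" by blast
    then have "(SOME t. t \<in> mcar T \<and> jX t = w e f) \<in> mcar T \<and> jX (SOME t. t \<in> mcar T \<and> jX t = w e f) = w e f"
      by (rule someI_ex)
    then show ?thesis unfolding r_def by simp
  qed
  have ru: "r (e, f) = t" if "inP E F p q e f" "t \<in> mcar T" "jX t = w e f" for e f t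
    using r[OF that(1)] that injX by (metis inj_onD)
  have Padd: "inP E F p q (madd E e e') (madd F f f')" if "inP E F p q e f" "inP E F p q e' f'" for e f e' f'
    using that rhom_closed[OF hp] unfolding inP_def by (simp add: rhom_add[OF hp] rhom_add[OF hq])
  have Pact: "inP E F p q (mact E e s) (mact F f s)" if "inP E F p q e f" "s \<in> carrier R" for e f s
    using that unfolding inP_def by (simp add: rhom_act[OF hp] rhom_act[OF hq])
  have "\<forall>e f e' f'. inP E F p q e f \<longrightarrow> inP E F p q e' f' \<longrightarrow>
        r (madd E e e', madd F f f') = madd T (r (e, f)) (r (e', f'))"
  proof (intro allI impI)
    fix e f e' f' assume a: "inP E F p q e f" "inP E F p q e' f'"
    have m: "e \<in> mcar E" "f \<in> mcar F" "e' \<in> mcar E" "f' \<in> mcar F" using a unfolding inP_def by simp_all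
    have "jX (madd T (r (e, f)) (r (e', f'))) = madd X (w e f) (w e' f')"
      using r[OF a(1)] r[OF a(2)] by (simp add: rhom_add[OF hjX])
    also have "\<dots> = w (madd E e e') (madd F f f')" unfolding w_def
      using m rhom_closed[OF X(3)] rhom_closed[OF g(1)]
      by (simp add: rhom_add[OF X(3)] rhom_add[OF g(1)] X.neg_distrib X.ac)
    finally show "r (madd E e e', madd F f f') = madd T (r (e, f)) (r (e', f'))"
      using ru[OF Padd[OF a]] r[OF a(1)] r[OF a(2)] by simp
  qed
  moreover have "\<forall>e f s. inP E F p q e f \<longrightarrow> s \<in> carrier R \<longrightarrow> r (mact E e s, mact F f s) = mact T (r (e, f)) s"
  proof (intro allI impI)
    fix e f s assume a: "inP E F p q e f" "s \<in> carrier R"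
    have m: "e \<in> mcar E" "f \<in> mcar F" using a unfolding inP_def by simp_all
    have "jX (mact T (r (e, f)) s) = mact X (w e f) s"
      using r[OF a(1)] a(2) by (simp add: rhom_act[OF hjX])
    also have "\<dots> = w (mact E e s) (mact F f s)" unfolding w_def
      using m a(2) rhom_closed[OF X(3)] rhom_closed[OF g(1)]
      by (simp add: rhom_act[OF X(3)] rhom_act[OF g(1)] X.act_add X.act_neg)
    finally show "r (mact E e s, mact F f s) = mact T (r (e, f)) s"
      using ru[OF Pact[OF a]] r[OF a(1)] a(2) by simp
  qed
  moreover have "\<forall>b\<in>mcar T2. r (mzero E, j b) = \<pi> b"
  proof
    fix b assume b: "b \<in> mcar T2"
    have P: "inP E F p q (mzero E) (j b)" unfolding inP_def
      using b rhom_closed[OF hj] rhom_zero[OF mE mM hp] sesD(5)[OF sesF]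
      by (metis (mono_tags, lifting) image_eqI mem_Collect_eq E.zero_closed)
    have "w (mzero E) (j b) = jX (\<pi> b)" unfolding w_def
      using X(4) b rhom_zero[OF mE mX g(1)] rhom_closed[OF hjX] rhom_closed[OF hpi] by simp
    then show "r (mzero E, j b) = \<pi> b" using ru[OF P] rhom_closed[OF hpi] b by simp
  qed
  moreover have "\<forall>e f. inP E F p q e f \<longrightarrow> r (e, f) \<in> mcar T" using r by blast
  ultimately show ?thesis by blast
qed


lemma retr_to_map:
  fixes T2 :: "('b,'r) rmod" and F :: "('f,'r) rmod" and E :: "('e,'r) rmod" and M :: "('m,'r) rmod"
  assumes mE: "rmodule R E" and mM: "rmodule R M" and mT2: "rmodule R T2" and mF: "rmodule R F"
    and sesF: "ses R T2 F M j q" and hp: "rhom R E M p" and surp: "p ` mcar E = mcar M"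
    and \<rho>c: "\<forall>e f. inP E F p q e f \<longrightarrow> \<rho> (e, f) \<in> mcar T2"
    and \<rho>a: "\<forall>e f e' f'. inP E F p q e f \<longrightarrow> inP E F p q e' f' \<longrightarrow>
        \<rho> (madd E e e', madd F f f') = madd T2 (\<rho> (e, f)) (\<rho> (e', f'))"
    and \<rho>r: "\<forall>e f s. inP E F p q e f \<longrightarrow> s \<in> carrier R \<longrightarrow> \<rho> (mact E e s, mact F f s) = mact T2 (\<rho> (e, f)) s"
    and \<rho>j: "\<forall>b\<in>mcar T2. \<rho> (mzero E, j b) = b"
  shows "\<exists>f. rhom R E F f \<and> (\<forall>e\<in>mcar E. q (f e) = p e)"
proof -
  interpret M: rm R M by (rule rm.intro) fact
  interpret T2: rm R T2 by (rule rm.intro) fact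
  interpret F: rm R F by (rule rm.intro) fact
  interpret E: rm R E by (rule rm.intro) fact
  note hj = sesD(1)[OF sesF] and hq = sesD(2)[OF sesF] and sur = sesD(4)[OF sesF] and ker = sesD(5)[OF sesF]
  note jc = rhom_closed[OF hj] and qc = rhom_closed[OF hq] and pc = rhom_closed[OF hp]
  have qj: "q (j b) = mzero M" if b: "b \<in> mcar T2" for b
  proof -
    have "j b \<in> {x \<in> mcar F. q x = mzero M}" unfolding ker using b by (rule imageI)
    then show ?thesis by simp
  qed
  define h where "h ef = madd F (snd ef) (mneg F (j (\<rho> ef)))" for ef
  have hc: "h (e, f) \<in> mcar F" if "inP E F p q e f" for e f
    using that \<rho>c jc unfolding h_def inP_def by simp
  have hqq: "q (h (e, f)) = p e" if "inP E F p q e f" for e f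
    using that \<rho>c jc qc unfolding h_def inP_def
    by (simp add: rhom_add[OF hq] rhom_neg[OF mF mM hq] qj)
  have Padd: "inP E F p q (madd E e e') (madd F f f')" if "inP E F p q e f" "inP E F p q e' f'" for e f e' f'
    using that pc unfolding inP_def by (simp add: rhom_add[OF hp] rhom_add[OF hq])
  have Pact: "inP E F p q (mact E e s) (mact F f s)" if "inP E F p q e f" "s \<in> carrier R" for e f s
    using that unfolding inP_def by (simp add: rhom_act[OF hp] rhom_act[OF hq])
  have ha: "h (madd E e e', madd F f f') = madd F (h (e, f)) (h (e', f'))"
    if a: "inP E F p q e f" "inP E F p q e' f'" for e f e' f'
  proof -
    have m: "f \<in> mcar F" "f' \<in> mcar F" "\<rho> (e, f) \<in> mcar T2" "\<rho> (e', f') \<in> mcar T2"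
      using a \<rho>c unfolding inP_def by simp_all
    have r1: "\<rho> (madd E e e', madd F f f') = madd T2 (\<rho> (e, f)) (\<rho> (e', f'))" using \<rho>a a by blast
    show ?thesis unfolding h_def fst_conv snd_conv r1 using m jc
      by (simp add: rhom_add[OF hj] F.neg_distrib F.ac)
  qed
  have hr: "h (mact E e s, mact F f s) = mact F (h (e, f)) s"
    if a: "inP E F p q e f" "s \<in> carrier R" for e f s
  proof -
    have m: "f \<in> mcar F" "\<rho> (e, f) \<in> mcar T2" using a \<rho>c unfolding inP_def by simp_all
    have r1: "\<rho> (mact E e s, mact F f s) = mact T2 (\<rho> (e, f)) s" using \<rho>r a by blast
    show ?thesis unfolding h_def fst_conv snd_conv r1 using a m jc
      by (simp add: rhom_act[OF hj] F.act_add F.act_neg)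
  qed
  have hind: "h (e, f') = h (e, f)" if a: "inP E F p q e f" "inP E F p q e f'" for e f f'
  proof -
    have m: "e \<in> mcar E" "f \<in> mcar F" "f' \<in> mcar F" "p e = q f" "p e = q f'" using a unfolding inP_def by simp_all
    have "madd F f' (mneg F f) \<in> {x \<in> mcar F. q x = mzero M}"
      using m qc by (simp add: rhom_add[OF hq] rhom_neg[OF mF mM hq])
    then obtain b where b: "b \<in> mcar T2" "j b = madd F f' (mneg F f)" unfolding ker by (elim imageE) simp
    have f': "f' = madd F f (j b)" using b m by (simp add: F.ac F.canc')
    have P0: "inP E F p q (mzero E) (j b)" unfolding inP_def using b(1) jc qj rhom_zero[OF mE mM hp] by simp
    have "h (e, f') = h (madd E e (mzero E), madd F f (j b))" using f' m by simp
    also have "\<dots> = madd F (h (e, f)) (h (mzero E, j b))" by (rule ha[OF a(1) P0])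
    also have "h (mzero E, j b) = mzero F" unfolding h_def using \<rho>j b(1) jc by simp
    finally show ?thesis using hc[OF a(1)] by simp
  qed
  define \<sigma> where "\<sigma> e = (SOME f. f \<in> mcar F \<and> q f = p e)" for e
  have \<sigma>: "\<sigma> e \<in> mcar F \<and> q (\<sigma> e) = p e" if e: "e \<in> mcar E" for e
  proof -
    have "p e \<in> q ` mcar F" using sur pc e by simp
    then obtain f where "f \<in> mcar F" "q f = p e" by (elim imageE) simp
    then have "\<exists>f. f \<in> mcar F \<and> q f = p e" by blast
    then show ?thesis unfolding \<sigma>_def by (rule someI_ex)
  qed
  have Ps: "inP E F p q e (\<sigma> e)" if "e \<in> mcar E" for e using \<sigma>[OF that] that unfolding inP_def by simp
  define f0 where "f0 e = h (e, \<sigma> e)" for e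
  have "rhom R E F f0" unfolding rhom_def
  proof (intro conjI ballI)
    fix e assume "e \<in> mcar E" then show "f0 e \<in> mcar F" unfolding f0_def using hc Ps by blast
  next
    fix e e' assume e: "e \<in> mcar E" "e' \<in> mcar E"
    have "f0 (madd E e e') = h (madd E e e', madd F (\<sigma> e) (\<sigma> e'))"
      unfolding f0_def using hind[OF Padd[OF Ps[OF e(1)] Ps[OF e(2)]] Ps[OF E.add_closed[OF e]]] .
    then show "f0 (madd E e e') = madd F (f0 e) (f0 e')"
      unfolding f0_def using ha[OF Ps[OF e(1)] Ps[OF e(2)]] by simp
  next
    fix e s assume e: "e \<in> mcar E" and s: "s \<in> carrier R"
    have "f0 (mact E e s) = h (mact E e s, mact F (\<sigma> e) s)"
      unfolding f0_def using hind[OF Pact[OF Ps[OF e] s] Ps[OF E.act_closed[OF e s]]] .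
    then show "f0 (mact E e s) = mact F (f0 e) s"
      unfolding f0_def using hr[OF Ps[OF e] s] by simp
  qed
  moreover have "\<forall>e\<in>mcar E. q (f0 e) = p e" unfolding f0_def using hqq Ps by blast
  ultimately show ?thesis by blast
qed


lemma dsum_simps:
  "mcar (dsum T k S) = {x. (\<forall>i<k. x i \<in> S i) \<and> (\<forall>i\<ge>k. x i = mzero T)}"
  "madd (dsum T k S) x y = (\<lambda>i. if i < k then madd T (x i) (y i) else mzero T)"
  "mzero (dsum T k S) = (\<lambda>i. mzero T)"
  "mact (dsum T k S) x r = (\<lambda>i. if i < k then mact T (x i) r else mzero T)"
  by (simp_all add: dsum_def)

lemma ext_map:
  fixes T :: "('t,'r) rmod" and M :: "('m,'r) rmod" and T2 :: "('b,'r) rmod" and F :: "('f,'r) rmod"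
    and T1 :: "('a,'r) rmod" and E :: "('e,'r) rmod"
  assumes fT: "finite_length R T" and fM: "finite_length R M" and mT2: "rmodule R T2"
    and mF: "rmodule R F" and sesF: "ses R T2 F M j q" and addT2: "in_add R T T2"
    and mE: "rmodule R E" and sesE: "ses R T1 E M i p"
    and univ: "\<forall>(X :: ('t \<times> 'm,'r) rmod) j q. finite_length R X \<and> ses R T X M j q \<longrightarrow>
        (\<exists>\<phi> g. rhom R T1 T \<phi> \<and> rhom R E X g \<and>
           (\<forall>t\<in>mcar T1. g (i t) = j (\<phi> t)) \<and> (\<forall>e\<in>mcar E. q (g e) = p e))"
  shows "\<exists>f. rhom R E F f \<and> (\<forall>e\<in>mcar E. q (f e) = p e)"
proof -
  note mT = fl_rmod[OF fT] and mM = fl_rmod[OF fM]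
  interpret T: rm R T by (rule rm.intro) fact
  interpret M: rm R M by (rule rm.intro) fact
  interpret T2: rm R T2 by (rule rm.intro) fact
  note hp = sesD(2)[OF sesE] and surp = sesD(4)[OF sesE]
  obtain Y k S where Y: "\<forall>l<k. summand R T (S l)" "Y = dsum T k S" "riso R T2 Y"
    using addT2 unfolding in_add_def is_add_model_def by blast
  obtain \<alpha> \<beta> where ab: "rhom R T2 Y \<alpha>" "rhom R Y T2 \<beta>" "\<forall>x\<in>mcar T2. \<beta> (\<alpha> x) = x"
    using Y(3) unfolding riso_def by blast
  have SC: "S l \<subseteq> mcar T" if "l < k" for l
    using Y(1) that unfolding summand_def submod_def by blast
  have carY: "mcar Y = {x. (\<forall>i<k. x i \<in> S i) \<and> (\<forall>i\<ge>k. x i = mzero T)}" unfolding Y(2) dsum_simps ..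
  have \<alpha>c: "\<alpha> b l \<in> S l" if "b \<in> mcar T2" "l < k" for b l
    using rhom_closed[OF ab(1) that(1)] that(2) unfolding carY by simp
  have \<alpha>z: "\<alpha> b l = mzero T" if "b \<in> mcar T2" "\<not> l < k" for b l
    using rhom_closed[OF ab(1) that(1)] that(2) unfolding carY by simp
  have hpi: "rhom R T2 T (\<lambda>b. \<alpha> b l)" if l: "l < k" for l
    unfolding rhom_def
  proof (intro conjI ballI)
    fix b assume "b \<in> mcar T2" then show "\<alpha> b l \<in> mcar T" using \<alpha>c SC l by blast
  next
    fix b b' assume "b \<in> mcar T2" "b' \<in> mcar T2"
    then show "\<alpha> (madd T2 b b') l = madd T (\<alpha> b l) (\<alpha> b' l)"
      using rhom_add[OF ab(1)] l unfolding Y(2) dsum_simps by simp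
  next
    fix b s assume "b \<in> mcar T2" "s \<in> carrier R"
    then show "\<alpha> (mact T2 b s) l = mact T (\<alpha> b l) s"
      using rhom_act[OF ab(1)] l unfolding Y(2) dsum_simps by simp
  qed
  define RP where "RP l r \<longleftrightarrow> (\<forall>e f. inP E F p q e f \<longrightarrow> r (e, f) \<in> mcar T) \<and>
    (\<forall>e f e' f'. inP E F p q e f \<longrightarrow> inP E F p q e' f' \<longrightarrow>
        r (madd E e e', madd F f f') = madd T (r (e, f)) (r (e', f'))) \<and>
    (\<forall>e f s. inP E F p q e f \<longrightarrow> s \<in> carrier R \<longrightarrow> r (mact E e s, mact F f s) = mact T (r (e, f)) s) \<and>
    (\<forall>b\<in>mcar T2. r (mzero E, j b) = \<alpha> b l)" for l and r :: "'e \<times> 'f \<Rightarrow> 't"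
  have "\<exists>rr. \<forall>l. l < k \<longrightarrow> RP l (rr l)"
  proof (rule choice, rule allI)
    fix l show "\<exists>r. l < k \<longrightarrow> RP l r"
    proof (cases "l < k")
      case True
      show ?thesis unfolding RP_def
        using comp_retr[OF fT fM mT2 mF sesF hpi[OF True] mE hp univ] True by blast
    qed simp
  qed
  then obtain rr where rr: "\<And>l. l < k \<Longrightarrow> RP l (rr l)" by blast
  have "\<exists>ee. \<forall>l. l < k \<longrightarrow> (rhom R T T (ee l) \<and> (\<forall>x\<in>mcar T. ee l x \<in> S l) \<and> (\<forall>x\<in>S l. ee l x = x))"
  proof (rule choice, rule allI)
    fix l show "\<exists>e. l < k \<longrightarrow> (rhom R T T e \<and> (\<forall>x\<in>mcar T. e x \<in> S l) \<and> (\<forall>x\<in>S l. e x = x))"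
    proof (cases "l < k")
      case True
      show ?thesis using summand_proj[OF mT Y(1)[rule_format, OF True]] by blast
    qed simp
  qed
  then obtain ee where ee: "\<And>l. l < k \<Longrightarrow> rhom R T T (ee l)" "\<And>l x. l < k \<Longrightarrow> x \<in> mcar T \<Longrightarrow> ee l x \<in> S l"
    "\<And>l x. l < k \<Longrightarrow> x \<in> S l \<Longrightarrow> ee l x = x" by blast
  define v where "v ef = (\<lambda>l. if l < k then ee l (rr l ef) else mzero T)" for ef
  define \<rho> where "\<rho> ef = \<beta> (v ef)" for ef
  have rc: "rr l (e, f) \<in> mcar T" if "l < k" "inP E F p q e f" for l e f
    using rr[OF that(1)] that(2) unfolding RP_def by blast
  have vc: "v (e, f) \<in> mcar Y" if "inP E F p q e f" for e f
    unfolding carY v_def using ee(2) rc that by simp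
  have va: "v (madd E e e', madd F f f') = madd Y (v (e, f)) (v (e', f'))"
    if a: "inP E F p q e f" "inP E F p q e' f'" for e f e' f'
  proof
    fix l show "v (madd E e e', madd F f f') l = madd Y (v (e, f)) (v (e', f')) l"
    proof (cases "l < k")
      case True
      have "rr l (madd E e e', madd F f f') = madd T (rr l (e, f)) (rr l (e', f'))"
        using rr[OF True] a unfolding RP_def by blast
      then show ?thesis unfolding v_def Y(2) dsum_simps using True rc[OF True a(1)] rc[OF True a(2)]
        by (simp add: rhom_add[OF ee(1)[OF True]])
    next
      case False then show ?thesis unfolding v_def Y(2) dsum_simps by simp
    qed
  qed
  have vr: "v (mact E e s, mact F f s) = mact Y (v (e, f)) s"
    if a: "inP E F p q e f" "s \<in> carrier R" for e f s
  proof
    fix l show "v (mact E e s, mact F f s) l = mact Y (v (e, f)) s l"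
    proof (cases "l < k")
      case True
      have "rr l (mact E e s, mact F f s) = mact T (rr l (e, f)) s"
        using rr[OF True] a unfolding RP_def by blast
      then show ?thesis unfolding v_def Y(2) dsum_simps using True rc[OF True a(1)] a(2)
        by (simp add: rhom_act[OF ee(1)[OF True]])
    next
      case False then show ?thesis unfolding v_def Y(2) dsum_simps by simp
    qed
  qed
  have vj: "v (mzero E, j b) = \<alpha> b" if b: "b \<in> mcar T2" for b
  proof
    fix l show "v (mzero E, j b) l = \<alpha> b l"
    proof (cases "l < k")
      case True
      have "rr l (mzero E, j b) = \<alpha> b l" using rr[OF True] b unfolding RP_def by blast
      then show ?thesis unfolding v_def using True ee(3) \<alpha>c b by simp
    next
      case False then show ?thesis unfolding v_def using \<alpha>z b by simp
    qed
  qed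
  show ?thesis
  proof (rule retr_to_map[OF mE mM mT2 mF sesF hp surp, of \<rho>])
    show "\<forall>e f. inP E F p q e f \<longrightarrow> \<rho> (e, f) \<in> mcar T2"
      unfolding \<rho>_def using vc rhom_closed[OF ab(2)] by blast
    show "\<forall>e f e' f'. inP E F p q e f \<longrightarrow> inP E F p q e' f' \<longrightarrow>
        \<rho> (madd E e e', madd F f f') = madd T2 (\<rho> (e, f)) (\<rho> (e', f'))"
      unfolding \<rho>_def using va vc rhom_add[OF ab(2)] by simp
    show "\<forall>e f s. inP E F p q e f \<longrightarrow> s \<in> carrier R \<longrightarrow> \<rho> (mact E e s, mact F f s) = mact T2 (\<rho> (e, f)) s"
      unfolding \<rho>_def using vr vc rhom_act[OF ab(2)] by simp
    show "\<forall>b\<in>mcar T2. \<rho> (mzero E, j b) = b"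
      unfolding \<rho>_def using vj ab(3) by simp
  qed
qed


lemma factor_lemma:
  fixes T :: "('t,'r) rmod" and E :: "('e,'r) rmod" and M :: "('m,'r) rmod" and T1 :: "('a,'r) rmod"
  assumes mE: "rmodule R E" and mM: "rmodule R M" and mT1: "rmodule R T1"
    and sesE: "ses R T1 E M i p" and add1: "in_add R T T1" and hh: "rhom R E E h"
    and ph: "\<forall>x\<in>mcar E. p (h x) = p x"
  shows "factors_add R T E E (\<lambda>x. madd E (h x) (mneg E x))"
proof -
  interpret M: rm R M by (rule rm.intro) fact
  interpret T1: rm R T1 by (rule rm.intro) fact
  interpret E: rm R E by (rule rm.intro) fact
  note hi = sesD(1)[OF sesE] and hp = sesD(2)[OF sesE] and inj = sesD(3)[OF sesE] and ker = sesD(5)[OF sesE]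
  define d where "d x = madd E (h x) (mneg E x)" for x
  have dc: "d x \<in> mcar E" if "x \<in> mcar E" for x using that rhom_closed[OF hh] unfolding d_def by simp
  have dk: "d x \<in> i ` mcar T1" if x: "x \<in> mcar E" for x
  proof -
    have "d x \<in> {x \<in> mcar E. p x = mzero M}" using dc[OF x] x ph rhom_closed[OF hh] rhom_closed[OF hp]
      unfolding d_def by (simp add: rhom_add[OF hp] rhom_neg[OF mE mM hp])
    then show ?thesis unfolding ker .
  qed
  define \<delta> where "\<delta> x = (SOME a. a \<in> mcar T1 \<and> i a = d x)" for x
  have \<delta>: "\<delta> x \<in> mcar T1 \<and> i (\<delta> x) = d x" if x: "x \<in> mcar E" for x
  proof -
    obtain a where "a \<in> mcar T1" "i a = d x" using dk[OF x] by (elim imageE) simp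
    then have "\<exists>a. a \<in> mcar T1 \<and> i a = d x" by blast
    then show ?thesis unfolding \<delta>_def by (rule someI_ex)
  qed
  have \<delta>u: "\<delta> x = a" if "x \<in> mcar E" "a \<in> mcar T1" "i a = d x" for x a
    using \<delta>[OF that(1)] that inj by (metis inj_onD)
  have hd: "rhom R E T1 \<delta>" unfolding rhom_def
  proof (intro conjI ballI)
    fix x assume "x \<in> mcar E" then show "\<delta> x \<in> mcar T1" using \<delta> by blast
  next
    fix x y assume x: "x \<in> mcar E" and y: "y \<in> mcar E"
    have "i (madd T1 (\<delta> x) (\<delta> y)) = madd E (d x) (d y)" using \<delta>[OF x] \<delta>[OF y] by (simp add: rhom_add[OF hi])
    also have "\<dots> = d (madd E x y)" unfolding d_def using x y rhom_closed[OF hh]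
      by (simp add: rhom_add[OF hh] E.neg_distrib E.ac)
    finally show "\<delta> (madd E x y) = madd T1 (\<delta> x) (\<delta> y)" using \<delta>[OF x] \<delta>[OF y] x y
      by (intro \<delta>u) simp_all
  next
    fix x s assume x: "x \<in> mcar E" and s: "s \<in> carrier R"
    have "i (mact T1 (\<delta> x) s) = mact E (d x) s" using \<delta>[OF x] s by (simp add: rhom_act[OF hi])
    also have "\<dots> = d (mact E x s)" unfolding d_def using x s rhom_closed[OF hh]
      by (simp add: rhom_act[OF hh] E.act_add E.act_neg)
    finally show "\<delta> (mact E x s) = mact T1 (\<delta> x) s" using \<delta>[OF x] x s
      by (intro \<delta>u) simp_all
  qed
  obtain Y where Y: "is_add_model R T Y" "riso R T1 Y" using add1 unfolding in_add_def by blast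
  obtain \<alpha> \<beta> where ab: "rhom R T1 Y \<alpha>" "rhom R Y T1 \<beta>" "\<forall>x\<in>mcar T1. \<beta> (\<alpha> x) = x"
    using Y(2) unfolding riso_def by blast
  have "rhom R E Y (\<lambda>x. \<alpha> (\<delta> x))" by (rule rhom_comp[OF hd ab(1)])
  moreover have "rhom R Y E (\<lambda>y. i (\<beta> y))" by (rule rhom_comp[OF ab(2) hi])
  moreover have "\<forall>x\<in>mcar E. madd E (h x) (mneg E x) = i (\<beta> (\<alpha> (\<delta> x)))"
    using \<delta> ab(3) unfolding d_def by simp
  ultimately show ?thesis unfolding factors_add_def using Y(1) by blast
qed

lemma uaeD:
  fixes T :: "('t,'r) rmod" and M :: "('m,'r) rmod"
  assumes "universal_add_ext R T M T' E i p"
  shows "in_add R T T'" "ses R T' E M i p"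
    "\<forall>(X :: ('t \<times> 'm, 'r) rmod) j q. finite_length R X \<and> ses R T X M j q \<longrightarrow>
        (\<exists>\<phi> g. rhom R T' T \<phi> \<and> rhom R E X g \<and>
           (\<forall>t\<in>mcar T'. g (i t) = j (\<phi> t)) \<and> (\<forall>e\<in>mcar E. q (g e) = p e))"
    apply (rule conjunct1[OF assms[unfolded universal_add_ext_def]])
   apply (rule conjunct1[OF conjunct2[OF assms[unfolded universal_add_ext_def]]])
  apply (rule conjunct2[OF conjunct2[OF assms[unfolded universal_add_ext_def]]])
  done

theorem corollary1p3:
  fixes R :: "'r ring"
    and T :: "('t, 'r) rmod" and M :: "('m, 'r) rmod"
    and T1 :: "('a, 'r) rmod" and E :: "('e, 'r) rmod"
    and i :: "'a \<Rightarrow> 'e" and p :: "'e \<Rightarrow> 'm"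
    and T2 :: "('b, 'r) rmod" and F :: "('f, 'r) rmod"
    and j :: "'b \<Rightarrow> 'f" and q :: "'f \<Rightarrow> 'm"
  assumes "ring R"
    and "finite_length R T" and "finite_length R M"
    and "finite_length R T1" and "finite_length R E"
    and "finite_length R T2" and "finite_length R F"
    and "universal_add_ext R T M T1 E i p"
    and "universal_add_ext R T M T2 F j q"
  shows "iso_mod_add R T E F"
proof -
  note fT = assms(2) and fM = assms(3)
  note mT1 = fl_rmod[OF assms(4)] and mE = fl_rmod[OF assms(5)]
    and mT2 = fl_rmod[OF assms(6)] and mF = fl_rmod[OF assms(7)] and mM = fl_rmod[OF assms(3)]
  note u1 = uaeD[OF assms(8)] and u2 = uaeD[OF assms(9)]
  obtain f where f: "rhom R E F f" "\<forall>e\<in>mcar E. q (f e) = p e"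
    using ext_map[OF fT fM mT2 mF u2(2) u2(1) mE u1(2) u1(3)] by blast
  obtain g where g: "rhom R F E g" "\<forall>e\<in>mcar F. p (g e) = q e"
    using ext_map[OF fT fM mT1 mE u1(2) u1(1) mF u2(2) u2(3)] by blast
  have "factors_add R T E E (\<lambda>x. madd E (g (f x)) (mneg E x))"
    using factor_lemma[OF mE mM mT1 u1(2) u1(1) rhom_comp[OF f(1) g(1)]] f g rhom_closed[OF f(1)] by simp
  moreover have "factors_add R T F F (\<lambda>y. madd F (f (g y)) (mneg F y))"
    using factor_lemma[OF mF mM mT2 u2(2) u2(1) rhom_comp[OF g(1) f(1)]] f g rhom_closed[OF g(1)] by simp
  ultimately show ?thesis unfolding iso_mod_add_def using f(1) g(1) by blast
qed
end
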